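(* For every finite field extension $\mathbb{K}/\mathbb{Q}$ with $\mathbb{K}$ real (embeddable in $\mathbb{R}$), there exists a finite set $\mathcal{I}$ of CI constraints such that $\mathcal{K}_{\mathbb{R}}(\mathcal{I})\neq\emptyset$ and for every $\Sigma\in\mathcal{K}_{\mathbb{R}}(\mathcal{I})$ the subfield of $\mathbb{R}$ generated by the entries of $\Sigma$ admits a field embedding of $\mathbb{K}$. In particular, all real algebraic numbers are necessary to witness the non-emptiness of regular Gaussian CI models: there exist non-empty positive models $\mathcal{K}_{\mathbb{R}}(\mathcal{I})$ containing no matrix with all entries rational.
   Context: Let $\mathsf{N}$ be a finite ground set. A CI statement is a symbol $(\mathsf{ij}|\mathsf{K})$ with $\mathsf{i}\neq\mathsf{j}\in\mathsf{N}$, $\mathsf{K}\subseteq\mathsf{N}\setminus\{\mathsf{i},\mathsf{j}\}$. For symmetric $\Sigma$, $[\mathsf{ij}|\mathsf{K}:\Sigma]:=\det\Sigma_{\mathsf{i}\mathsf{K},\mathsf{j}\mathsf{K}}$. A set of CI constraints $\mathcal{I}$ consists of statements $(\mathsf{ij}|\mathsf{K})$, satisfied by $\Sigma$ iff $[\mathsf{ij}|\mathsf{K}:\Sigma]=0$, and negated statements $\neg(\mathsf{ij}|\mathsf{K})$, satisfied iff $[\mathsf{ij}|\mathsf{K}:\Sigma]\neq0$. $\mathcal{K}_{\mathbb{R}}(\mathcal{I})$ is the set of real positive-definite symmetric $\mathsf{N}\times\mathsf{N}$ matrices satisfying all constraints of $\mathcal{I}$ (covariance matrices of regular Gaussian distributions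 satisfying $\mathcal I$). *)

theory Defs
  imports Complex_Main "Jordan_Normal_Form.Determinant"
begin

text \<open>Matrices on a finite ground set N of natural numbers are functions
  nat => nat => real; only the entries indexed by N x N are relevant.\<close>

type_synonym cmat = "nat \<Rightarrow> nat \<Rightarrow> real"

definition sym_on :: "nat set \<Rightarrow> cmat \<Rightarrow> bool" where
  "sym_on N S \<longleftrightarrow> (\<forall>i\<in>N. \<forall>j\<in>N. S i j = S j i)"

definition posdef_on :: "nat set \<Rightarrow> cmat \<Rightarrow> bool" where
  "posdef_on N S \<longleftrightarrow> sym_on N S \<and>
     (\<forall>x::nat \<Rightarrow> real. (\<exists>i\<in>N. x i \<noteq> 0) \<longrightarrow>
        (\<Sum>i\<in>N. \<Sum>j\<in>N. x i * S i j * x j) > 0)"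

text \<open>[ij|K : Sigma] = det Sigma_{iK,jK}; rows i,K and columns j,K, where K is
  listed in increasing order (the ordering only affects the sign).\<close>
definition ci_minor :: "cmat \<Rightarrow> nat \<Rightarrow> nat \<Rightarrow> nat set \<Rightarrow> real" where
  "ci_minor S i j K =
     (let rs = i # sorted_list_of_set K; cs = j # sorted_list_of_set K
      in det (mat (card K + 1) (card K + 1) (\<lambda>(r, c). S (rs ! r) (cs ! c))))"

datatype ci_constraint = CI nat nat "nat set" | NegCI nat nat "nat set"

fun ci_wf :: "nat set \<Rightarrow> ci_constraint \<Rightarrow> bool" where
  "ci_wf N (CI i j K) \<longleftrightarrow> i \<in> N \<and> j \<in> N \<and> i \<noteq> j \<and> K \<subseteq> N - {i, j}"
| "ci_wf N (NegCI i j K) \<longleftrightarrow> i \<in> N \<and> j \<in> N \<and> i \<noteq> j \<and> K \<subseteq> N - {i, j}"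

fun ci_sat :: "cmat \<Rightarrow> ci_constraint \<Rightarrow> bool" where
  "ci_sat S (CI i j K) \<longleftrightarrow> ci_minor S i j K = 0"
| "ci_sat S (NegCI i j K) \<longleftrightarrow> ci_minor S i j K \<noteq> 0"

definition gauss_model :: "nat set \<Rightarrow> ci_constraint set \<Rightarrow> cmat set" where
  "gauss_model N I = {S. posdef_on N S \<and> (\<forall>c\<in>I. ci_sat S c)}"

definition is_subfield_real :: "real set \<Rightarrow> bool" where
  "is_subfield_real F \<longleftrightarrow> 0 \<in> F \<and> 1 \<in> F \<and>
     (\<forall>x\<in>F. \<forall>y\<in>F. x + y \<in> F \<and> x * y \<in> F) \<and>
     (\<forall>x\<in>F. - x \<in> F \<and> inverse x \<in> F)"

definition subfield_gen :: "real set \<Rightarrow> real set" where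
  "subfield_gen A = \<Inter>{F. is_subfield_real F \<and> A \<subseteq> F}"

definition entries_on :: "nat set \<Rightarrow> cmat \<Rightarrow> real set" where
  "entries_on N S = {S i j | i j. i \<in> N \<and> j \<in> N}"

definition field_hom :: "('a::field \<Rightarrow> 'b::field) \<Rightarrow> bool" where
  "field_hom f \<longleftrightarrow> f 1 = 1 \<and> (\<forall>x y. f (x + y) = f x + f y \<and> f (x * y) = f x * f y)"

definition finite_over_rat :: "'a::field_char_0 itself \<Rightarrow> bool" where
  "finite_over_rat _ \<longleftrightarrow> (\<exists>B::'a set. finite B \<and>
     (\<forall>x::'a. \<exists>c. x = (\<Sum>b\<in>B. of_rat (c b) * b)))"

end

theory Submission
  imports Defs "HOL-Library.Countable"
begin


lemma prod_list_map_upt: "prod_list (map f [0..<n]) = prod f {0..<n}"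
  by (induct n) auto

lemma det_arrow:
  fixes s :: real and p q d :: "nat \<Rightarrow> real"
  assumes d: "\<And>r. r < m \<Longrightarrow> d r \<noteq> 0"
  shows "det (mat (Suc m) (Suc m) (\<lambda>(r,c). if r = 0 then (if c = 0 then s else p (c-1))
            else if c = 0 then q (r-1) else if r = c then d (r-1) else 0))
         = (\<Prod>r<m. d r) * (s - (\<Sum>r<m. p r * q r / d r))"
proof -
  define M where "M = (mat (Suc m) (Suc m) (\<lambda>(r,c). if r = 0 then (if c = 0 then s else p (c-1))
            else if c = 0 then q (r-1) else if r = c then d (r-1) else 0) :: real mat)"
  define E where "E = (mat (Suc m) (Suc m) (\<lambda>(r,c). if r = c then 1 else if c = 0 then - q (r-1) / d (r-1) else 0) :: real mat)"
  have M: "M \<in> carrier_mat (Suc m) (Suc m)" and E: "E \<in> carrier_mat (Suc m) (Suc m)"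
    unfolding M_def E_def by auto
  have detE: "det E = 1"
  proof -
    have "det E = prod_list (diag_mat E)"
      by (rule det_lower_triangular[OF _ E]) (auto simp: E_def)
    also have "diag_mat E = map (\<lambda>i. 1) [0..<Suc m]"
      unfolding diag_mat_def E_def by (intro map_cong) auto
    also have "prod_list (map (\<lambda>i. 1::real) [0..<Suc m]) = 1"
      by (induct m) auto
    finally show ?thesis .
  qed
  have ME: "(M * E) $$ (i, j) = (if j = 0 then (if i = 0 then s - (\<Sum>r<m. p r * q r / d r) else 0) else M $$ (i,j))"
    if i: "i < Suc m" and j: "j < Suc m" for i j
  proof -
    have "(M * E) $$ (i, j) = (\<Sum>t<Suc m. M $$ (i,t) * E $$ (t,j))"
      using i j M E by (simp add: scalar_prod_def lessThan_atLeast0)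
    also have "\<dots> = (if j = 0 then (if i = 0 then s - (\<Sum>r<m. p r * q r / d r) else 0) else M $$ (i,j))"
    proof (cases "j = 0")
      case True
      have "(\<Sum>t<Suc m. M $$ (i,t) * E $$ (t,j)) = M $$ (i,0) + (\<Sum>r<m. M $$ (i, Suc r) * (- q r / d r))"
        unfolding sum.lessThan_Suc_shift using True E_def by simp
      also have "\<dots> = (if i = 0 then s - (\<Sum>r<m. p r * q r / d r) else 0)"
      proof (cases "i = 0")
        case True
        then show ?thesis using i by (simp add: M_def sum_negf)
      next
        case False
        then obtain i' where i': "i = Suc i'" "i' < m" using i by (cases i) auto
        have "(\<Sum>r<m. M $$ (i, Suc r) * (- q r / d r)) = (\<Sum>r<m. if r = i' then - q i' else 0)"
          using i' d by (intro sum.cong) (auto simp: M_def)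
        also have "\<dots> = - q i'" using i' by simp
        finally show ?thesis using i' by (simp add: M_def)
      qed
      finally show ?thesis using True by simp
    next
      case False
      have "(\<Sum>t<Suc m. M $$ (i,t) * E $$ (t,j)) = (\<Sum>t<Suc m. if t = j then M $$ (i,j) else 0)"
        using False j by (intro sum.cong) (auto simp: E_def)
      also have "\<dots> = M $$ (i,j)" using j by simp
      finally show ?thesis using False by simp
    qed
    finally show ?thesis .
  qed
  have MEc: "M * E \<in> carrier_mat (Suc m) (Suc m)" using M E by auto
  have ut: "upper_triangular (M * E)"
  proof (rule upper_triangularI)
    fix i j assume "j < i" "i < dim_row (M * E)"
    then show "(M * E) $$ (i, j) = 0" using MEc ME[of i j]
      by (cases "j = 0") (auto simp: M_def)
  qed
  have "det (M * E) = prod_list (diag_mat (M * E))"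
    by (rule det_upper_triangular[OF ut MEc])
  also have "\<dots> = (\<Prod>i<Suc m. (M * E) $$ (i,i))"
    using MEc M unfolding diag_mat_def prod_list_map_upt by (simp only: lessThan_atLeast0 carrier_matD index_mult_mat)
  also have "\<dots> = (s - (\<Sum>r<m. p r * q r / d r)) * (\<Prod>r<m. d r)"
  proof -
    have "(\<Prod>r<m. (M * E) $$ (Suc r, Suc r)) = (\<Prod>r<m. d r)"
    proof (intro prod.cong refl)
      fix r assume "r \<in> {..<m}"
      then show "(M * E) $$ (Suc r, Suc r) = d r" using ME[of "Suc r" "Suc r"] by (simp add: M_def)
    qed
    then show ?thesis unfolding prod.lessThan_Suc_shift using ME[of 0 0] by simp
  qed
  finally have "det (M * E) = (\<Prod>r<m. d r) * (s - (\<Sum>r<m. p r * q r / d r))" by simp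
  moreover have "det (M * E) = det M * det E" by (rule det_mult[OF M E])
  ultimately show ?thesis using detE M_def by simp
qed

lemma sum_nth_distinct:
  assumes "distinct xs"
  shows "(\<Sum>r<length xs. f (xs ! r)) = sum f (set xs)"
  using sum.reindex_bij_betw[OF bij_betw_nth[OF assms refl refl], of f] by simp

lemma prod_nth_distinct:
  assumes "distinct xs"
  shows "(\<Prod>r<length xs. f (xs ! r)) = prod f (set xs)"
  using prod.reindex_bij_betw[OF bij_betw_nth[OF assms refl refl], of f] by simp

lemma ci_minor_arrow:
  fixes S :: cmat
  assumes K: "finite K"
    and off: "\<And>a b. a \<in> K \<Longrightarrow> b \<in> K \<Longrightarrow> a \<noteq> b \<Longrightarrow> S a b = 0"
    and dg: "\<And>a. a \<in> K \<Longrightarrow> S a a \<noteq> 0"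
  shows "ci_minor S i j K = (\<Prod>a\<in>K. S a a) * (S i j - (\<Sum>a\<in>K. S i a * S a j / S a a))"
proof -
  define ks where "ks = sorted_list_of_set K"
  have dist: "distinct ks" and setks: "set ks = K" and len: "length ks = card K"
    using K by (auto simp: ks_def)
  define m where "m = card K"
  have eq: "mat (card K + 1) (card K + 1) (\<lambda>(r, c). S ((i # ks) ! r) ((j # ks) ! c)) =
     mat (Suc m) (Suc m) (\<lambda>(r,c). if r = 0 then (if c = 0 then S i j else S i (ks ! (c-1)))
            else if c = 0 then S (ks ! (r-1)) j else if r = c then S (ks ! (r-1)) (ks ! (r-1)) else 0)"
  proof (rule eq_matI)
    fix r c assume r: "r < dim_row (mat (Suc m) (Suc m) (\<lambda>(r,c). if r = 0 then (if c = 0 then S i j else S i (ks ! (c-1)))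
            else if c = 0 then S (ks ! (r-1)) j else if r = c then S (ks ! (r-1)) (ks ! (r-1)) else 0))"
      and c: "c < dim_col (mat (Suc m) (Suc m) (\<lambda>(r,c). if r = 0 then (if c = 0 then S i j else S i (ks ! (c-1)))
            else if c = 0 then S (ks ! (r-1)) j else if r = c then S (ks ! (r-1)) (ks ! (r-1)) else 0))"
    have rm: "r < Suc m" and cm: "c < Suc m" using r c by auto
    show "mat (card K + 1) (card K + 1) (\<lambda>(r, c). S ((i # ks) ! r) ((j # ks) ! c)) $$ (r, c) =
      mat (Suc m) (Suc m) (\<lambda>(r,c). if r = 0 then (if c = 0 then S i j else S i (ks ! (c-1)))
            else if c = 0 then S (ks ! (r-1)) j else if r = c then S (ks ! (r-1)) (ks ! (r-1)) else 0) $$ (r, c)"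
    proof (cases "r = 0 \<or> c = 0 \<or> r = c")
      case True
      then show ?thesis using rm cm by (auto simp: m_def nth_Cons split: nat.splits)
    next
      case False
      then obtain r' c' where rc: "r = Suc r'" "c = Suc c'" "r' \<noteq> c'" "r' < m" "c' < m"
        using rm cm by (cases r; cases c) auto
      have "ks ! r' \<noteq> ks ! c'" using dist rc len by (simp add: nth_eq_iff_index_eq m_def)
      moreover have "ks ! r' \<in> K" "ks ! c' \<in> K" using rc len setks by (auto simp: m_def)
      ultimately have "S (ks ! r') (ks ! c') = 0" using off by blast
      then show ?thesis using rc by (simp add: m_def)
    qed
  qed (auto simp: m_def)
  have "ci_minor S i j K = det (mat (Suc m) (Suc m) (\<lambda>(r,c). if r = 0 then (if c = 0 then S i j else S i (ks ! (c-1)))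
            else if c = 0 then S (ks ! (r-1)) j else if r = c then S (ks ! (r-1)) (ks ! (r-1)) else 0))"
    unfolding ci_minor_def Let_def ks_def[symmetric] eq ..
  also have "\<dots> = (\<Prod>r<m. S (ks ! r) (ks ! r)) * (S i j - (\<Sum>r<m. S i (ks ! r) * S (ks ! r) j / S (ks ! r) (ks ! r)))"
    by (rule det_arrow[where d = "\<lambda>r. S (ks ! r) (ks ! r)" and p = "\<lambda>c. S i (ks ! c)" and q = "\<lambda>r. S (ks ! r) j", simplified])
      (use dg len setks in \<open>auto simp: m_def\<close>)
  also have "\<dots> = (\<Prod>a\<in>K. S a a) * (S i j - (\<Sum>a\<in>K. S i a * S a j / S a a))"
    using sum_nth_distinct[OF dist, of "\<lambda>a. S i a * S a j / S a a"]
      prod_nth_distinct[OF dist, of "\<lambda>a. S a a"] len setks by (simp add: m_def)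
  finally show ?thesis .
qed


lemma subfield_gen_sub: "is_subfield_real (subfield_gen A)"
  unfolding subfield_gen_def is_subfield_real_def by auto

lemma subfield_gen_incl: "A \<subseteq> subfield_gen A"
  unfolding subfield_gen_def by auto

lemma subfield_gen_least: "is_subfield_real F \<Longrightarrow> A \<subseteq> F \<Longrightarrow> subfield_gen A \<subseteq> F"
  unfolding subfield_gen_def by auto

context
  fixes F assumes F: "is_subfield_real F"
begin
lemma sf0: "0 \<in> F" using F unfolding is_subfield_real_def by auto
lemma sf1: "1 \<in> F" using F unfolding is_subfield_real_def by auto
lemma sfadd: "x \<in> F \<Longrightarrow> y \<in> F \<Longrightarrow> x + y \<in> F" using F unfolding is_subfield_real_def by auto
lemma sfmult: "x \<in> F \<Longrightarrow> y \<in> F \<Longrightarrow> x * y \<in> F" using F unfolding is_subfield_real_def by auto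
lemma sfuminus: "x \<in> F \<Longrightarrow> - x \<in> F" using F unfolding is_subfield_real_def by auto
lemma sfinverse: "x \<in> F \<Longrightarrow> inverse x \<in> F" using F unfolding is_subfield_real_def by auto
lemma sfdiff: "x \<in> F \<Longrightarrow> y \<in> F \<Longrightarrow> x - y \<in> F"
  using sfadd[of x "- y"] sfuminus[of y] by simp
lemma sfdivide: "x \<in> F \<Longrightarrow> y \<in> F \<Longrightarrow> x / y \<in> F"
  using sfmult[of x "inverse y"] sfinverse[of y] by (simp add: divide_inverse)
lemma sfnat: "of_nat n \<in> F"
  by (induct n) (auto simp: sf0 sf1 sfadd)
lemma sfint: "of_int z \<in> F"
proof (cases "z \<ge> 0")
  case True then show ?thesis using sfnat[of "nat z"] by simp
next
  case False then show ?thesis using sfuminus[OF sfnat[of "nat (- z)"]] by simp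
qed
lemma sfrat: "of_rat q \<in> F"
proof -
  obtain a b where "quotient_of q = (a, b)" by (cases "quotient_of q") auto
  then have "q = of_int a / of_int b" by (rule quotient_of_div)
  then have "(of_rat q :: real) = of_int a / of_int b" by (simp add: of_rat_divide)
  then show ?thesis using sfdivide[OF sfint sfint] by simp
qed
lemma sfsum: "(\<And>i. i \<in> A \<Longrightarrow> f i \<in> F) \<Longrightarrow> sum f A \<in> F"
  by (induct A rule: infinite_finite_induct) (auto simp: sf0 sfadd)
end

lemma Rats_subfield: "is_subfield_real \<rat>"
  unfolding is_subfield_real_def by auto



definition ax :: "nat \<Rightarrow> nat" where "ax i = i + 4"

definition GN :: "nat set \<Rightarrow> nat set" where "GN C = {0,1,2,3} \<union> ax ` C"

definition GI :: "nat set \<Rightarrow> (nat \<times> nat \<times> nat set) set \<Rightarrow> (nat \<times> nat) set \<Rightarrow> ci_constraint set" where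
  "GI C \<Phi> \<Psi> = (\<lambda>(i,j). CI (ax i) (ax j) {}) ` {(i,j). i \<in> C \<and> j \<in> C \<and> i < j}
      \<union> (\<lambda>(x,y,R). CI x y (ax ` C)) ` \<Phi> \<union> (\<lambda>(x,y,R). CI x y (ax ` (C - R))) ` \<Phi>
      \<union> (\<lambda>(x,i). NegCI x (ax i) {}) ` \<Psi>"

lemma inj_ax: "inj ax" unfolding ax_def inj_def by auto

lemma ax_ge: "ax i \<ge> 4" unfolding ax_def by simp

locale gsetup =
  fixes C :: "nat set" and \<Phi> :: "(nat \<times> nat \<times> nat set) set" and \<Psi> :: "(nat \<times> nat) set"
  assumes C: "finite C" and \<Phi>fin: "finite \<Phi>" and \<Psi>fin: "finite \<Psi>"
    and \<Phi>ok: "\<And>x y R. (x,y,R) \<in> \<Phi> \<Longrightarrow> x < 4 \<and> y < 4 \<and> x \<noteq> y \<and> R \<subseteq> C"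
    and \<Psi>ok: "\<And>x i. (x,i) \<in> \<Psi> \<Longrightarrow> x < 4 \<and> i \<in> C"
begin

lemma finN: "finite (GN C)" using C unfolding GN_def by auto

lemma finI: "finite (GI C \<Phi> \<Psi>)"
proof -
  have "{(i,j). i \<in> C \<and> j \<in> C \<and> i < j} \<subseteq> C \<times> C" by auto
  then have "finite {(i,j). i \<in> C \<and> j \<in> C \<and> i < j}" using C finite_subset by blast
  then show ?thesis using \<Phi>fin \<Psi>fin unfolding GI_def by auto
qed

lemma wf: "\<forall>c\<in>GI C \<Phi> \<Psi>. ci_wf (GN C) c"
proof
  fix c assume c: "c \<in> GI C \<Phi> \<Psi>"
  have axN: "ax i \<in> GN C" if "i \<in> C" for i using that unfolding GN_def by auto
  have xN: "x \<in> GN C" if "x < 4" for x using that unfolding GN_def by auto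
  have axne: "ax i \<noteq> x" if "x < 4" for i x using ax_ge[of i] that by auto
  have axinj: "ax i = ax j \<longleftrightarrow> i = j" for i j by (simp add: ax_def)
  show "ci_wf (GN C) c"
  proof (cases "c \<in> (\<lambda>(i,j). CI (ax i) (ax j) {}) ` {(i,j). i \<in> C \<and> j \<in> C \<and> i < j}")
    case True
    then obtain i j where "c = CI (ax i) (ax j) {}" "i \<in> C" "j \<in> C" "i < j" by auto
    then show ?thesis using axN axinj by auto
  next
    case F1: False
    show ?thesis
    proof (cases "c \<in> (\<lambda>(x,i). NegCI x (ax i) {}) ` \<Psi>")
      case True
      then obtain x i where "c = NegCI x (ax i) {}" "(x,i) \<in> \<Psi>" by auto
      then show ?thesis using \<Psi>ok axN xN axne by fastforce
    next
      case False
      have "c \<in> (\<lambda>(x,y,R). CI x y (ax ` C)) ` \<Phi> \<union> (\<lambda>(x,y,R). CI x y (ax ` (C - R))) ` \<Phi>"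
        using F1 False c unfolding GI_def by blast
      then obtain x y R K where cx: "c = CI x y (ax ` K)" "(x,y,R) \<in> \<Phi>" "K \<subseteq> C"
        by (elim UnE imageE) (auto split: prod.splits)
      then have "x < 4" "y < 4" "x \<noteq> y" using \<Phi>ok by auto
      then show ?thesis using cx axN xN axne ax_ge by fastforce
    qed
  qed
qed

end

definition gV :: "(nat \<Rightarrow> nat \<Rightarrow> real) \<Rightarrow> nat \<Rightarrow> nat \<Rightarrow> real" where
  "gV c a i = (if a < 4 then c a i else if a = ax i then 1 else 0)"

definition gS :: "nat set \<Rightarrow> (nat \<Rightarrow> nat \<Rightarrow> real) \<Rightarrow> cmat" where
  "gS C c a b = (\<Sum>i\<in>C. gV c a i * gV c b i) + (if a = b \<and> a < 4 then 1 else 0)"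

context gsetup
begin

lemma gS_xy: "x < 4 \<Longrightarrow> y < 4 \<Longrightarrow> gS C c x y = (\<Sum>i\<in>C. c x i * c y i) + (if x = y then 1 else 0)"
  unfolding gS_def gV_def by simp

lemma gS_xa: assumes "x < 4" "j \<in> C" shows "gS C c x (ax j) = c x j" "gS C c (ax j) x = c x j"
proof -
  have "(\<Sum>i\<in>C. gV c x i * gV c (ax j) i) = (\<Sum>i\<in>C. if i = j then c x j else 0)"
    using assms ax_ge[of j] by (intro sum.cong) (auto simp: gV_def ax_def)
  also have "\<dots> = c x j" using assms C by simp
  finally show "gS C c x (ax j) = c x j" "gS C c (ax j) x = c x j"
    unfolding gS_def using assms ax_ge[of j] by (auto simp: mult.commute)
qed

lemma gS_aa: assumes "i \<in> C" "j \<in> C" shows "gS C c (ax i) (ax j) = (if i = j then 1 else 0)"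
proof -
  have "(\<Sum>k\<in>C. gV c (ax i) k * gV c (ax j) k) = (\<Sum>k\<in>C. if i = j then (if k = i then 1 else 0) else 0)"
    using assms ax_ge[of i] ax_ge[of j] by (intro sum.cong) (auto simp: gV_def ax_def)
  also have "\<dots> = (if i = j then 1 else 0)" using assms C by (auto simp: sum.delta)
  finally show ?thesis unfolding gS_def using ax_ge[of i] by auto
qed

lemma gS_sym: "sym_on N (gS C c)" unfolding sym_on_def gS_def by (auto simp: mult.commute)

lemma gS_quad:
  assumes N: "finite N"
  shows "(\<Sum>a\<in>N. \<Sum>b\<in>N. z a * gS C c a b * z b) =
     (\<Sum>i\<in>C. (\<Sum>a\<in>N. z a * gV c a i)\<^sup>2) + (\<Sum>a\<in>N. if a < 4 then (z a)\<^sup>2 else 0)"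
proof -
  have "(\<Sum>a\<in>N. \<Sum>b\<in>N. z a * gS C c a b * z b) =
     (\<Sum>a\<in>N. \<Sum>b\<in>N. \<Sum>i\<in>C. (z a * gV c a i) * (z b * gV c b i)) +
     (\<Sum>a\<in>N. \<Sum>b\<in>N. z a * (if a = b \<and> a < 4 then 1 else 0) * z b)"
    unfolding gS_def sum.distrib[symmetric]
    by (intro sum.cong refl) (simp add: sum_distrib_left sum_distrib_right algebra_simps)
  also have "(\<Sum>a\<in>N. \<Sum>b\<in>N. \<Sum>i\<in>C. (z a * gV c a i) * (z b * gV c b i)) =
      (\<Sum>i\<in>C. (\<Sum>a\<in>N. z a * gV c a i)\<^sup>2)"
  proof -
    have "(\<Sum>a\<in>N. \<Sum>b\<in>N. \<Sum>i\<in>C. (z a * gV c a i) * (z b * gV c b i)) =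
        (\<Sum>a\<in>N. \<Sum>i\<in>C. \<Sum>b\<in>N. (z a * gV c a i) * (z b * gV c b i))"
      by (rule sum.cong[OF refl], rule sum.swap)
    also have "\<dots> = (\<Sum>i\<in>C. \<Sum>a\<in>N. \<Sum>b\<in>N. (z a * gV c a i) * (z b * gV c b i))"
      by (rule sum.swap)
    also have "\<dots> = (\<Sum>i\<in>C. (\<Sum>a\<in>N. z a * gV c a i)\<^sup>2)"
      by (simp add: power2_eq_square sum_product)
    finally show ?thesis .
  qed
  also have "(\<Sum>a\<in>N. \<Sum>b\<in>N. z a * (if a = b \<and> a < 4 then 1 else 0) * z b) =
      (\<Sum>a\<in>N. if a < 4 then (z a)\<^sup>2 else 0)"
  proof (intro sum.cong refl)
    fix a assume a: "a \<in> N"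
    have "(\<Sum>b\<in>N. z a * (if a = b \<and> a < 4 then 1 else 0) * z b) = (\<Sum>b\<in>N. if b = a then (if a < 4 then (z a)\<^sup>2 else 0) else 0)"
      by (intro sum.cong refl) (auto simp: power2_eq_square)
    also have "\<dots> = (if a < 4 then (z a)\<^sup>2 else 0)" using a N by simp
    finally show "(\<Sum>b\<in>N. z a * (if a = b \<and> a < 4 then 1 else 0) * z b) = (if a < 4 then (z a)\<^sup>2 else 0)" .
  qed
  finally show ?thesis .
qed

lemma gS_posdef: "posdef_on (GN C) (gS C c)"
  unfolding posdef_on_def
proof (intro conjI allI impI gS_sym)
  fix z :: "nat \<Rightarrow> real"
  assume ex: "\<exists>i\<in>GN C. z i \<noteq> 0"
  let ?Q = "(\<Sum>a\<in>GN C. \<Sum>b\<in>GN C. z a * gS C c a b * z b)"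
  have Q: "?Q = (\<Sum>i\<in>C. (\<Sum>a\<in>GN C. z a * gV c a i)\<^sup>2) + (\<Sum>a\<in>GN C. if a < 4 then (z a)\<^sup>2 else 0)"
    by (rule gS_quad[OF finN])
  have nn1: "(\<Sum>i\<in>C. (\<Sum>a\<in>GN C. z a * gV c a i)\<^sup>2) \<ge> 0" by (intro sum_nonneg) auto
  have nn2: "(\<Sum>a\<in>GN C. if a < 4 then (z a)\<^sup>2 else 0) \<ge> 0" by (intro sum_nonneg) auto
  show "?Q > 0"
  proof (rule ccontr)
    assume "\<not> ?Q > 0"
    then have s1: "(\<Sum>i\<in>C. (\<Sum>a\<in>GN C. z a * gV c a i)\<^sup>2) = 0"
      and s2: "(\<Sum>a\<in>GN C. if a < 4 then (z a)\<^sup>2 else 0) = 0"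
      using Q nn1 nn2 by linarith+
    have z4: "z a = 0" if "a \<in> GN C" "a < 4" for a
    proof -
      have "\<forall>a\<in>GN C. (if a < 4 then (z a)\<^sup>2 else 0) = 0"
        using s2 finN by (subst sum_nonneg_eq_0_iff[symmetric]) auto
      then show ?thesis using that by auto
    qed
    have za: "z (ax i) = 0" if i: "i \<in> C" for i
    proof -
      have "\<forall>i\<in>C. (\<Sum>a\<in>GN C. z a * gV c a i)\<^sup>2 = 0"
        using s1 C by (subst sum_nonneg_eq_0_iff[symmetric]) auto
      then have "(\<Sum>a\<in>GN C. z a * gV c a i) = 0" using i by auto
      moreover have "(\<Sum>a\<in>GN C. z a * gV c a i) = (\<Sum>a\<in>GN C. if a = ax i then z a else 0)"
        using z4 ax_ge by (intro sum.cong refl) (auto simp: gV_def)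
      moreover have "ax i \<in> GN C" using i unfolding GN_def by auto
      ultimately show ?thesis using finN by simp
    qed
    obtain a where a: "a \<in> GN C" "z a \<noteq> 0" using ex by auto
    show False
    proof (cases "a < 4")
      case True then show ?thesis using z4 a by auto
    next
      case False
      then obtain i where "i \<in> C" "a = ax i" using a unfolding GN_def by auto
      then show ?thesis using za a by auto
    qed
  qed
qed

end


lemma posdef_diag:
  assumes P: "posdef_on N S" and N: "finite N" and a: "a \<in> N"
  shows "S a a > 0"
proof -
  let ?z = "\<lambda>i. if i = a then 1 else (0::real)"
  have ex: "\<exists>i\<in>N. ?z i \<noteq> 0" using a by auto
  have "\<forall>x::nat\<Rightarrow>real. (\<exists>i\<in>N. x i \<noteq> 0) \<longrightarrow> (\<Sum>i\<in>N. \<Sum>j\<in>N. x i * S i j * x j) > 0"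
    using P unfolding posdef_on_def by blast
  then have "(\<Sum>i\<in>N. \<Sum>j\<in>N. ?z i * S i j * ?z j) > 0" using ex by (elim allE[where x = ?z]) (erule mp)
  moreover have "(\<Sum>i\<in>N. \<Sum>j\<in>N. ?z i * S i j * ?z j) = S a a"
  proof -
    have "(\<Sum>i\<in>N. \<Sum>j\<in>N. ?z i * S i j * ?z j) = (\<Sum>i\<in>N. if i = a then S a a else 0)"
    proof (intro sum.cong refl)
      fix i assume "i \<in> N"
      have "(\<Sum>j\<in>N. ?z i * S i j * ?z j) = (\<Sum>j\<in>N. if j = a then (if i = a then S a a else 0) else 0)"
        by (intro sum.cong refl) auto
      also have "\<dots> = (if i = a then S a a else 0)" using a N by simp
      finally show "(\<Sum>j\<in>N. ?z i * S i j * ?z j) = (if i = a then S a a else 0)" .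
    qed
    also have "\<dots> = S a a" using a N by simp
    finally show ?thesis .
  qed
  ultimately show ?thesis by simp
qed

lemma ci_minor_empty: "ci_minor S i j {} = S i j"
  unfolding ci_minor_def by (simp add: det_single)

context gsetup
begin

lemma gS_minor:
  assumes xy: "x < 4" "y < 4" "x \<noteq> y" and C': "C' \<subseteq> C"
  shows "ci_minor (gS C c) x y (ax ` C') = (\<Sum>i\<in>C - C'. c x i * c y i)"
proof -
  have fC': "finite C'" using C' C finite_subset by blast
  have "ci_minor (gS C c) x y (ax ` C') = (\<Prod>a\<in>ax ` C'. gS C c a a) *
      (gS C c x y - (\<Sum>a\<in>ax ` C'. gS C c x a * gS C c a y / gS C c a a))"
  proof (rule ci_minor_arrow)
    show "finite (ax ` C')" using fC' by simp
  next
    fix a b assume "a \<in> ax ` C'" "b \<in> ax ` C'" "a \<noteq> b"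
    then obtain i j where "a = ax i" "b = ax j" "i \<in> C" "j \<in> C" "i \<noteq> j" using C' by blast
    then show "gS C c a b = 0" using gS_aa by simp
  next
    fix a assume "a \<in> ax ` C'"
    then obtain i where "a = ax i" "i \<in> C" using C' by blast
    then show "gS C c a a \<noteq> 0" using gS_aa by simp
  qed
  also have "(\<Prod>a\<in>ax ` C'. gS C c a a) = 1"
  proof (rule prod.neutral, rule ballI)
    fix a assume "a \<in> ax ` C'"
    then obtain i where "a = ax i" "i \<in> C" using C' by blast
    then show "gS C c a a = 1" using gS_aa by simp
  qed
  also have "(\<Sum>a\<in>ax ` C'. gS C c x a * gS C c a y / gS C c a a) = (\<Sum>i\<in>C'. c x i * c y i)"
  proof -
    have "(\<Sum>a\<in>ax ` C'. gS C c x a * gS C c a y / gS C c a a) = (\<Sum>i\<in>C'. gS C c x (ax i) * gS C c (ax i) y / gS C c (ax i) (ax i))"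
      by (rule sum.reindex_cong[OF inj_on_subset[OF inj_ax subset_UNIV] refl]) simp
    also have "\<dots> = (\<Sum>i\<in>C'. c x i * c y i)"
    proof (rule sum.cong[OF refl])
      fix i assume "i \<in> C'"
      then have "i \<in> C" using C' by blast
      then show "gS C c x (ax i) * gS C c (ax i) y / gS C c (ax i) (ax i) = c x i * c y i"
        using gS_aa[of i i] gS_xa[of x i] gS_xa[of y i] xy by simp
    qed
    finally show ?thesis .
  qed
  also have "gS C c x y = (\<Sum>i\<in>C. c x i * c y i)" using gS_xy xy by simp
  finally show ?thesis using sum_diff[OF C C', of "\<lambda>i. c x i * c y i"] by simp
qed

context
  fixes c :: "nat \<Rightarrow> nat \<Rightarrow> real"
  assumes wit1: "\<And>x y R. (x,y,R) \<in> \<Phi> \<Longrightarrow> (\<Sum>i\<in>R. c x i * c y i) = 0"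
    and wit2: "\<And>x i. (x,i) \<in> \<Psi> \<Longrightarrow> c x i \<noteq> 0"
begin

lemma gS_model: "gS C c \<in> gauss_model (GN C) (GI C \<Phi> \<Psi>)"
  unfolding gauss_model_def
proof (intro CollectI conjI gS_posdef ballI)
  fix k assume k: "k \<in> GI C \<Phi> \<Psi>"
  have "k \<in> (\<lambda>(i,j). CI (ax i) (ax j) {}) ` {(i,j). i \<in> C \<and> j \<in> C \<and> i < j}
      \<or> k \<in> (\<lambda>(x,y,R). CI x y (ax ` C)) ` \<Phi> \<or> k \<in> (\<lambda>(x,y,R). CI x y (ax ` (C - R))) ` \<Phi>
      \<or> k \<in> (\<lambda>(x,i). NegCI x (ax i) {}) ` \<Psi>" using k unfolding GI_def by blast
  then show "ci_sat (gS C c) k"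
  proof (elim disjE)
    assume "k \<in> (\<lambda>(i,j). CI (ax i) (ax j) {}) ` {(i,j). i \<in> C \<and> j \<in> C \<and> i < j}"
    then obtain i j where "k = CI (ax i) (ax j) {}" "i \<in> C" "j \<in> C" "i < j" by auto
    then show ?thesis by (simp add: ci_minor_empty gS_aa)
  next
    assume "k \<in> (\<lambda>(x,y,R). CI x y (ax ` C)) ` \<Phi>"
    then obtain x y R where "k = CI x y (ax ` C)" "(x,y,R) \<in> \<Phi>" by auto
    then show ?thesis using gS_minor[of x y C] \<Phi>ok by simp
  next
    assume "k \<in> (\<lambda>(x,y,R). CI x y (ax ` (C - R))) ` \<Phi>"
    then obtain x y R where k: "k = CI x y (ax ` (C - R))" and xyR: "(x,y,R) \<in> \<Phi>" by auto
    then have "R \<subseteq> C" using \<Phi>ok by auto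
    then have "C - (C - R) = R" by auto
    then show ?thesis using k gS_minor[of x y "C - R"] \<Phi>ok[OF xyR] wit1[OF xyR] by auto
  next
    assume "k \<in> (\<lambda>(x,i). NegCI x (ax i) {}) ` \<Psi>"
    then obtain x i where "k = NegCI x (ax i) {}" "(x,i) \<in> \<Psi>" by auto
    then show ?thesis using gS_xa \<Psi>ok wit2 by (simp add: ci_minor_empty)
  qed
qed

end
end


context gsetup
begin

context
  fixes S assumes S: "S \<in> gauss_model (GN C) (GI C \<Phi> \<Psi>)"
begin

lemma S_pd: "posdef_on (GN C) S" using S unfolding gauss_model_def by auto
lemma S_sat: "k \<in> GI C \<Phi> \<Psi> \<Longrightarrow> ci_sat S k" using S unfolding gauss_model_def by auto
lemma S_sym: "a \<in> GN C \<Longrightarrow> b \<in> GN C \<Longrightarrow> S a b = S b a"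
  using S_pd unfolding posdef_on_def sym_on_def by auto

lemma S_diag: "i \<in> C \<Longrightarrow> S (ax i) (ax i) > 0"
  by (rule posdef_diag[OF S_pd finN]) (auto simp: GN_def)

lemma S_off: assumes "i \<in> C" "j \<in> C" "i \<noteq> j" shows "S (ax i) (ax j) = 0"
proof -
  have *: "S (ax i) (ax j) = 0" if "i \<in> C" "j \<in> C" "i < j" for i j
  proof -
    have h: "CI (ax i) (ax j) {} \<in> GI C \<Phi> \<Psi>" using that unfolding GI_def by auto
    show ?thesis using S_sat[OF h] by (simp add: ci_minor_empty)
  qed
  show ?thesis
  proof (cases "i < j")
    case True then show ?thesis using * assms by auto
  next
    case False
    then have "S (ax j) (ax i) = 0" using * assms by auto
    moreover have "ax i \<in> GN C" "ax j \<in> GN C" using assms by (auto simp: GN_def)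
    ultimately show ?thesis using S_sym by metis
  qed
qed

lemma S_minor:
  assumes xy: "x < 4" "y < 4" and C': "C' \<subseteq> C" and z: "ci_minor S x y (ax ` C') = 0"
  shows "S x y = (\<Sum>i\<in>C'. S x (ax i) * S y (ax i) / S (ax i) (ax i))"
proof -
  have fC': "finite C'" using C' C finite_subset by blast
  have "ci_minor S x y (ax ` C') = (\<Prod>a\<in>ax ` C'. S a a) *
      (S x y - (\<Sum>a\<in>ax ` C'. S x a * S a y / S a a))"
  proof (rule ci_minor_arrow)
    show "finite (ax ` C')" using fC' by simp
  next
    fix a b assume "a \<in> ax ` C'" "b \<in> ax ` C'" "a \<noteq> b"
    then obtain i j where "a = ax i" "b = ax j" "i \<in> C" "j \<in> C" "i \<noteq> j" using C' by blast
    then show "S a b = 0" using S_off by simp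
  next
    fix a assume "a \<in> ax ` C'"
    then obtain i where "a = ax i" "i \<in> C" using C' by blast
    then show "S a a \<noteq> 0" using S_diag[of i] by simp
  qed
  moreover have "(\<Prod>a\<in>ax ` C'. S a a) \<noteq> 0"
  proof -
    have "S a a \<noteq> 0" if a: "a \<in> ax ` C'" for a
    proof -
      obtain i where "a = ax i" "i \<in> C" using C' a by blast
      then show "S a a \<noteq> 0" using S_diag[of i] by simp
    qed
    then show ?thesis using fC' by (simp add: prod_zero_iff)
  qed
  ultimately have "S x y = (\<Sum>a\<in>ax ` C'. S x a * S a y / S a a)" using z by simp
  also have "\<dots> = (\<Sum>i\<in>C'. S x (ax i) * S (ax i) y / S (ax i) (ax i))"
    by (rule sum.reindex_cong[OF inj_on_subset[OF inj_ax subset_UNIV] refl]) simp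
  also have "\<dots> = (\<Sum>i\<in>C'. S x (ax i) * S y (ax i) / S (ax i) (ax i))"
  proof (rule sum.cong[OF refl])
    fix i assume "i \<in> C'"
    then have "ax i \<in> GN C" "y \<in> GN C" using C' xy by (auto simp: GN_def)
    then show "S x (ax i) * S (ax i) y / S (ax i) (ax i) = S x (ax i) * S y (ax i) / S (ax i) (ax i)"
      using S_sym by metis
  qed
  finally show ?thesis .
qed

lemma S_Phi:
  assumes xyR: "(x,y,R) \<in> \<Phi>"
  shows "(\<Sum>i\<in>R. S x (ax i) * S y (ax i) / S (ax i) (ax i)) = 0"
proof -
  have ok: "x < 4" "y < 4" "R \<subseteq> C" using \<Phi>ok[OF xyR] by auto
  have h1: "CI x y (ax ` C) \<in> GI C \<Phi> \<Psi>" and h2: "CI x y (ax ` (C - R)) \<in> GI C \<Phi> \<Psi>"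
    using xyR unfolding GI_def by force+
  have z1: "ci_minor S x y (ax ` C) = 0" using S_sat[OF h1] by simp
  have z2: "ci_minor S x y (ax ` (C - R)) = 0" using S_sat[OF h2] by simp
  let ?f = "\<lambda>i. S x (ax i) * S y (ax i) / S (ax i) (ax i)"
  have "sum ?f C = sum ?f (C - R)" using S_minor[OF ok(1,2) _ z1] S_minor[OF ok(1,2) _ z2] by auto
  moreover have "sum ?f (C - (C - R)) = sum ?f C - sum ?f (C - R)" by (rule sum_diff[OF C]) auto
  moreover have "C - (C - R) = R" using ok by auto
  ultimately show ?thesis by simp
qed

lemma S_Psi: "(x,i) \<in> \<Psi> \<Longrightarrow> S x (ax i) \<noteq> 0"
proof -
  assume "(x,i) \<in> \<Psi>"
  then have h: "NegCI x (ax i) {} \<in> GI C \<Phi> \<Psi>" unfolding GI_def by force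
  show ?thesis using S_sat[OF h] by (simp add: ci_minor_empty)
qed

lemma S_entries: "x < 4 \<Longrightarrow> i \<in> C \<Longrightarrow> S x (ax i) \<in> subfield_gen (entries_on (GN C) S)"
  "i \<in> C \<Longrightarrow> S (ax i) (ax i) \<in> subfield_gen (entries_on (GN C) S)"
proof -
  have "S a b \<in> subfield_gen (entries_on (GN C) S)" if "a \<in> GN C" "b \<in> GN C" for a b
  proof -
    have "S a b \<in> entries_on (GN C) S" unfolding entries_on_def using that by blast
    then show ?thesis using subfield_gen_incl by blast
  qed
  moreover have "x \<in> GN C" if "x < 4" for x :: nat using that unfolding GN_def by auto
  moreover have "ax i \<in> GN C" if "i \<in> C" for i using that unfolding GN_def by auto
  ultimately show "x < 4 \<Longrightarrow> i \<in> C \<Longrightarrow> S x (ax i) \<in> subfield_gen (entries_on (GN C) S)"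
    "i \<in> C \<Longrightarrow> S (ax i) (ax i) \<in> subfield_gen (entries_on (GN C) S)"
    by auto
qed

end
end



datatype crd = C0 | Neg | Mst nat | Gc nat | Pc nat nat | Tc nat nat nat nat

instance crd :: countable by countable_datatype

definition TIdx :: "nat \<Rightarrow> (nat \<Rightarrow> nat \<Rightarrow> nat \<Rightarrow> int) \<Rightarrow> (nat \<times> nat \<times> nat \<times> nat) set" where
  "TIdx n m = (SIGMA i:{..<n}. SIGMA j:{..<n}. SIGMA k:{..<n}. {..<nat \<bar>m i j k\<bar>})"

definition Tset :: "nat \<Rightarrow> (nat \<Rightarrow> nat \<Rightarrow> nat \<Rightarrow> int) \<Rightarrow> nat \<Rightarrow> nat \<Rightarrow> crd set" where
  "Tset n m i j = (\<lambda>(k,c). Tc i j k c) ` (SIGMA k:{..<n}. {..<nat \<bar>m i j k\<bar>})"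

definition Crds :: "nat \<Rightarrow> (nat \<Rightarrow> nat \<Rightarrow> nat \<Rightarrow> int) \<Rightarrow> crd set" where
  "Crds n m = {C0, Neg} \<union> Mst ` {..<n} \<union> Gc ` {..<n} \<union> (\<lambda>(i,j). Pc i j) ` ({..<n} \<times> {..<n})
     \<union> (\<lambda>(i,j,k,c). Tc i j k c) ` TIdx n m"

fun sig :: "(nat \<Rightarrow> nat \<Rightarrow> nat \<Rightarrow> int) \<Rightarrow> crd \<Rightarrow> real" where
  "sig m C0 = 1"
| "sig m Neg = -1"
| "sig m (Mst k) = 1"
| "sig m (Gc j) = 1"
| "sig m (Pc i j) = -1"
| "sig m (Tc i j k c) = - of_int (sgn (m i j k))"

definition Phic :: "nat \<Rightarrow> (nat \<Rightarrow> nat \<Rightarrow> nat \<Rightarrow> int) \<Rightarrow> (nat \<times> nat \<times> crd set) set" where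
  "Phic n m =
     (\<lambda>t. (0,1,{C0,t})) ` {t\<in>Crds n m. sig m t = -1}
   \<union> (\<lambda>t. (0,1,{t,Neg})) ` {t\<in>Crds n m. t \<noteq> C0 \<and> sig m t = 1}
   \<union> (\<lambda>(i,j). (2,1,{Pc i j, Mst i})) ` ({..<n} \<times> {..<n})
   \<union> (\<lambda>(i,j,k,c). (2,1,{Tc i j k c, Mst k})) ` TIdx n m
   \<union> (\<lambda>j. (2,1,{C0, Gc j})) ` {..<n}
   \<union> (\<lambda>j. (0,3,{C0, Mst j})) ` {..<n}
   \<union> (\<lambda>(i,j,k,c). (0,3,{C0, Tc i j k c})) ` TIdx n m
   \<union> (\<lambda>(i,j). (0,3,{Pc i j, Gc j})) ` ({..<n} \<times> {..<n})
   \<union> (\<lambda>j. (2,3,{Mst j, Gc j})) ` {..<n}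
   \<union> (\<lambda>(i,j). (2,3, insert (Pc i j) (Tset n m i j))) ` ({..<n} \<times> {..<n})"

definition Psic :: "nat \<Rightarrow> (nat \<Rightarrow> nat \<Rightarrow> nat \<Rightarrow> int) \<Rightarrow> nat \<Rightarrow> (nat \<times> crd) set" where
  "Psic n m k0 = (\<lambda>t. (0,t)) ` Crds n m \<union> {(1,C0), (2,C0), (3,C0), (2, Mst k0)}"

lemma fin_TIdx: "finite (TIdx n m)" unfolding TIdx_def by auto
lemma fin_Crds: "finite (Crds n m)" unfolding Crds_def using fin_TIdx by auto
lemma fin_Tset: "finite (Tset n m i j)" unfolding Tset_def by auto

lemma norm_sum:
  fixes u v w D :: "crd \<Rightarrow> real"
  assumes "\<And>t. t \<in> R \<Longrightarrow> w t \<noteq> 0" "\<And>t. t \<in> R \<Longrightarrow> D t \<noteq> 0" "u0 \<noteq> 0" "v0 \<noteq> 0" "w0 \<noteq> 0" "D0 \<noteq> 0"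
    and "(\<Sum>t\<in>R. u t * v t / D t) = 0"
  shows "(\<Sum>t\<in>R. (u t * w0 / (u0 * w t)) * (v t * w t * D0 / (v0 * w0 * D t))) = 0"
proof -
  have "(\<Sum>t\<in>R. (u t * w0 / (u0 * w t)) * (v t * w t * D0 / (v0 * w0 * D t))) =
      (\<Sum>t\<in>R. (D0 / (u0 * v0)) * (u t * v t / D t))"
    using assms(1-6) by (intro sum.cong refl) (simp add: field_simps)
  also have "\<dots> = (D0 / (u0 * v0)) * (\<Sum>t\<in>R. u t * v t / D t)" by (simp add: sum_distrib_left)
  finally show ?thesis using assms(7) by simp
qed


lemma TIdx_iff: "(i,j,k,c) \<in> TIdx n m \<longleftrightarrow> i < n \<and> j < n \<and> k < n \<and> c < nat \<bar>m i j k\<bar>"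
  unfolding TIdx_def by auto

lemma Tset_iff: "t \<in> Tset n m i j \<longleftrightarrow> (\<exists>k c. t = Tc i j k c \<and> k < n \<and> c < nat \<bar>m i j k\<bar>)"
  unfolding Tset_def by auto

lemma Crds_mem: "C0 \<in> Crds n m" "Neg \<in> Crds n m" "k < n \<Longrightarrow> Mst k \<in> Crds n m" "k < n \<Longrightarrow> Gc k \<in> Crds n m"
  "i < n \<Longrightarrow> j < n \<Longrightarrow> Pc i j \<in> Crds n m" "(i,j,k,c) \<in> TIdx n m \<Longrightarrow> Tc i j k c \<in> Crds n m"
  unfolding Crds_def by (auto intro: rev_image_eqI)

lemma Tset_sub: "i < n \<Longrightarrow> j < n \<Longrightarrow> Tset n m i j \<subseteq> Crds n m"
  using Crds_mem(6) by (auto simp: Tset_iff TIdx_iff)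

lemma Tset_mem: "i < n \<Longrightarrow> j < n \<Longrightarrow> t \<in> Tset n m i j \<Longrightarrow> t \<in> Crds n m"
  using Tset_sub by blast

lemma sig_pm: "t \<in> Crds n m \<Longrightarrow> sig m t = 1 \<or> sig m t = -1"
  unfolding Crds_def TIdx_def by (auto simp: sgn_if)

lemma Phi_mem:
  "t \<in> Crds n m \<Longrightarrow> sig m t = -1 \<Longrightarrow> (0,1,{C0,t}) \<in> Phic n m"
  "t \<in> Crds n m \<Longrightarrow> t \<noteq> C0 \<Longrightarrow> sig m t = 1 \<Longrightarrow> (0,1,{t,Neg}) \<in> Phic n m"
  "i < n \<Longrightarrow> j < n \<Longrightarrow> (2,1,{Pc i j, Mst i}) \<in> Phic n m"
  "(i,j,k,c) \<in> TIdx n m \<Longrightarrow> (2,1,{Tc i j k c, Mst k}) \<in> Phic n m"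
  "j < n \<Longrightarrow> (2,1,{C0, Gc j}) \<in> Phic n m"
  "j < n \<Longrightarrow> (0,3,{C0, Mst j}) \<in> Phic n m"
  "(i,j,k,c) \<in> TIdx n m \<Longrightarrow> (0,3,{C0, Tc i j k c}) \<in> Phic n m"
  "i < n \<Longrightarrow> j < n \<Longrightarrow> (0,3,{Pc i j, Gc j}) \<in> Phic n m"
  "j < n \<Longrightarrow> (2,3,{Mst j, Gc j}) \<in> Phic n m"
  "i < n \<Longrightarrow> j < n \<Longrightarrow> (2,3,insert (Pc i j) (Tset n m i j)) \<in> Phic n m"
  unfolding Phic_def by (auto intro: rev_image_eqI)

lemma sum_Tset:
  "(\<Sum>t\<in>Tset n m i j. f t) = (\<Sum>k<n. \<Sum>c<nat \<bar>m i j k\<bar>. f (Tc i j k c))"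
proof -
  have inj: "inj_on (\<lambda>(k,c). Tc i j k c) (SIGMA k:{..<n}. {..<nat \<bar>m i j k\<bar>})"
    by (auto simp: inj_on_def)
  have "(\<Sum>t\<in>Tset n m i j. f t) = (\<Sum>(k,c)\<in>(SIGMA k:{..<n}. {..<nat \<bar>m i j k\<bar>}). f (Tc i j k c))"
    unfolding Tset_def by (subst sum.reindex[OF inj]) (simp add: case_prod_unfold)
  also have "\<dots> = (\<Sum>k<n. \<Sum>c<nat \<bar>m i j k\<bar>. f (Tc i j k c))"
    by (rule sum.Sigma[symmetric]) auto
  finally show ?thesis .
qed


lemma Phic_sub: "(x,y,R) \<in> Phic n m \<Longrightarrow> R \<subseteq> Crds n m"
  unfolding Phic_def using Crds_mem Tset_mem by (auto simp: TIdx_iff)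

locale dnec =
  fixes n :: nat and m :: "nat \<Rightarrow> nat \<Rightarrow> nat \<Rightarrow> int" and k0 :: nat
    and a :: "nat \<Rightarrow> crd \<Rightarrow> real" and D :: "crd \<Rightarrow> real"
  assumes Dnz: "\<And>t. t \<in> Crds n m \<Longrightarrow> D t \<noteq> 0"
    and eq: "\<And>x y R. (x,y,R) \<in> Phic n m \<Longrightarrow> (\<Sum>t\<in>R. a x t * a y t / D t) = 0"
    and nz: "\<And>x t. (x,t) \<in> Psic n m k0 \<Longrightarrow> a x t \<noteq> 0"
    and k0: "k0 < n"
begin

definition "Yv t = a 2 t * a 0 C0 / (a 2 C0 * a 0 t)"
definition "Zb t = a 1 t * a 0 t * D C0 / (a 1 C0 * a 0 C0 * D t)"
definition "Zw t = a 3 t * a 0 t * D C0 / (a 3 C0 * a 0 C0 * D t)"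

lemma nz0: "t \<in> Crds n m \<Longrightarrow> a 0 t \<noteq> 0" using nz unfolding Psic_def by auto
lemma nzC: "a 1 C0 \<noteq> 0" "a 2 C0 \<noteq> 0" "a 3 C0 \<noteq> 0" "a 2 (Mst k0) \<noteq> 0"
  using nz unfolding Psic_def by auto
lemma nzD0: "D C0 \<noteq> 0" "a 0 C0 \<noteq> 0" using Dnz nz0 Crds_mem(1) by auto

lemma Phi_sub: "(x,y,R) \<in> Phic n m \<Longrightarrow> R \<subseteq> Crds n m"
  by (rule Phic_sub)

lemma B0:
  assumes xyR: "(0,q,R) \<in> Phic n m" and that: "a q C0 \<noteq> 0"
  shows "(\<Sum>t\<in>R. a q t * a 0 t * D C0 / (a q C0 * a 0 C0 * D t)) = 0"
proof -
  have R: "R \<subseteq> Crds n m" using Phi_sub[OF xyR] .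
  have "(\<Sum>t\<in>R. (a 0 t * a 0 C0 / (a 0 C0 * a 0 t)) * (a q t * a 0 t * D C0 / (a q C0 * a 0 C0 * D t))) = 0"
    by (rule norm_sum) (use R nz0 Dnz nzD0 that eq[OF xyR] in auto)
  moreover have "(\<Sum>t\<in>R. (a 0 t * a 0 C0 / (a 0 C0 * a 0 t)) * (a q t * a 0 t * D C0 / (a q C0 * a 0 C0 * D t)))
      = (\<Sum>t\<in>R. a q t * a 0 t * D C0 / (a q C0 * a 0 C0 * D t))"
    using R nz0 nzD0 by (intro sum.cong refl) (auto simp: subset_iff)
  ultimately show ?thesis by simp
qed

lemma B2:
  assumes xyR: "(2,q,R) \<in> Phic n m" and that: "a q C0 \<noteq> 0"
  shows "(\<Sum>t\<in>R. Yv t * (a q t * a 0 t * D C0 / (a q C0 * a 0 C0 * D t))) = 0"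
  unfolding Yv_def
  by (rule norm_sum) (use Phi_sub[OF xyR] nz0 Dnz nzD0 nzC that eq[OF xyR] in auto)

lemma B01: "(0,1,R) \<in> Phic n m \<Longrightarrow> (\<Sum>t\<in>R. Zb t) = 0"
  using B0[of 1 R] nzC unfolding Zb_def by simp
lemma B03: "(0,3,R) \<in> Phic n m \<Longrightarrow> (\<Sum>t\<in>R. Zw t) = 0"
  using B0[of 3 R] nzC unfolding Zw_def by simp
lemma B21: "(2,1,R) \<in> Phic n m \<Longrightarrow> (\<Sum>t\<in>R. Yv t * Zb t) = 0"
  using B2[of 1 R] nzC unfolding Zb_def by simp
lemma B23: "(2,3,R) \<in> Phic n m \<Longrightarrow> (\<Sum>t\<in>R. Yv t * Zw t) = 0"
  using B2[of 3 R] nzC unfolding Zw_def by simp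

lemma ZbC0: "Zb C0 = 1" using nzC nzD0 unfolding Zb_def by simp
lemma ZwC0: "Zw C0 = 1" using nzC nzD0 unfolding Zw_def by simp
lemma YvC0: "Yv C0 = 1" using nzC nzD0 unfolding Yv_def by simp

lemma ZbNeg: "Zb Neg = -1"
  using B01[OF Phi_mem(1)[OF Crds_mem(2)]] ZbC0 by simp

lemma Zbsig: assumes t: "t \<in> Crds n m" shows "Zb t = sig m t"
proof (cases "t = C0")
  case True then show ?thesis using ZbC0 by simp
next
  case False
  show ?thesis
  proof (cases "sig m t = -1")
    case True
    then show ?thesis using B01[OF Phi_mem(1)[OF t True]] ZbC0 False by simp
  next
    case F2: False
    then have s1: "sig m t = 1" using sig_pm[OF t] by auto
    then have "t \<noteq> Neg" by auto
    then show ?thesis using B01[OF Phi_mem(2)[OF t False s1]] ZbNeg s1 by simp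
  qed
qed

lemma YvP: assumes i: "i < n" and j: "j < n" shows "Yv (Pc i j) = Yv (Mst i)"
  using B21[OF Phi_mem(3)[OF i j]] Zbsig[OF Crds_mem(5)[OF i j]] Zbsig[OF Crds_mem(3)[OF i]] by simp

lemma sgn_sq: "(of_int (sgn z) :: real) * of_int (sgn z) = 1" if "z \<noteq> 0"
  using that by (auto simp: sgn_if)

lemma YvT: assumes "(i,j,k,c) \<in> TIdx n m"
  shows "Yv (Tc i j k c) = of_int (sgn (m i j k)) * Yv (Mst k)"
proof -
  have mz: "m i j k \<noteq> 0" and kn: "k < n" using assms by (auto simp: TIdx_iff)
  have "Yv (Tc i j k c) * (- of_int (sgn (m i j k))) + Yv (Mst k) = 0"
    using B21[OF Phi_mem(4)[OF assms]] Zbsig[OF Crds_mem(6)[OF assms]] Zbsig[OF Crds_mem(3)[OF kn]] by simp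
  then have "Yv (Mst k) = Yv (Tc i j k c) * of_int (sgn (m i j k))" by simp
  then have "of_int (sgn (m i j k)) * Yv (Mst k) = Yv (Tc i j k c) * (of_int (sgn (m i j k)) * of_int (sgn (m i j k)))"
    by (simp add: ac_simps)
  then show ?thesis using sgn_sq[OF mz] by simp
qed

lemma YvG: assumes j: "j < n" shows "Yv (Gc j) = -1"
  using B21[OF Phi_mem(5)[OF j]] Zbsig[OF Crds_mem(1)] Zbsig[OF Crds_mem(4)[OF j]] YvC0 by simp

lemma ZwM: assumes j: "j < n" shows "Zw (Mst j) = -1"
  using B03[OF Phi_mem(6)[OF j]] ZwC0 by simp

lemma ZwT: assumes "(i,j,k,c) \<in> TIdx n m" shows "Zw (Tc i j k c) = -1"
  using B03[OF Phi_mem(7)[OF assms]] ZwC0 by simp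

lemma ZwG: assumes j: "j < n" shows "Zw (Gc j) = - Yv (Mst j)"
  using B23[OF Phi_mem(9)[OF j]] ZwM[OF j] YvG[OF j] by simp

lemma ZwP: assumes i: "i < n" and j: "j < n" shows "Zw (Pc i j) = Yv (Mst j)"
  using B03[OF Phi_mem(8)[OF i j]] ZwG[OF j] by simp

lemma main_eq:
  assumes i: "i < n" and j: "j < n"
  shows "Yv (Mst i) * Yv (Mst j) = (\<Sum>k<n. of_int (m i j k) * Yv (Mst k))"
proof -
  have "Pc i j \<notin> Tset n m i j" by (auto simp: Tset_iff)
  then have "Yv (Pc i j) * Zw (Pc i j) + (\<Sum>t\<in>Tset n m i j. Yv t * Zw t) = 0"
    using B23[OF Phi_mem(10)[OF i j]] fin_Tset by simp
  moreover have "(\<Sum>t\<in>Tset n m i j. Yv t * Zw t) = (\<Sum>k<n. \<Sum>c<nat \<bar>m i j k\<bar>. Yv (Tc i j k c) * Zw (Tc i j k c))"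
    by (rule sum_Tset)
  moreover have "(\<Sum>k<n. \<Sum>c<nat \<bar>m i j k\<bar>. Yv (Tc i j k c) * Zw (Tc i j k c)) = (\<Sum>k<n. - (of_int (m i j k) * Yv (Mst k)))"
  proof (rule sum.cong[OF refl])
    fix k assume k: "k \<in> {..<n}"
    have "(\<Sum>c<nat \<bar>m i j k\<bar>. Yv (Tc i j k c) * Zw (Tc i j k c)) = (\<Sum>c<nat \<bar>m i j k\<bar>. - (of_int (sgn (m i j k)) * Yv (Mst k)))"
      using i j k by (intro sum.cong refl) (simp add: YvT ZwT TIdx_iff)
    also have "\<dots> = - (of_nat (nat \<bar>m i j k\<bar>) * of_int (sgn (m i j k)) * Yv (Mst k))" by simp
    also have "of_nat (nat \<bar>m i j k\<bar>) * (of_int (sgn (m i j k)) :: real) = of_int (m i j k)"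
      by (simp add: sgn_if)
    finally show "(\<Sum>c<nat \<bar>m i j k\<bar>. Yv (Tc i j k c) * Zw (Tc i j k c)) = - (of_int (m i j k) * Yv (Mst k))" .
  qed
  ultimately show ?thesis using YvP[OF i j] ZwP[OF i j] by (simp add: sum_negf)
qed

lemma Ynz: "Yv (Mst k0) \<noteq> 0"
  using nzC nzD0 nz0[OF Crds_mem(3)[OF k0]] unfolding Yv_def by simp

end


fun Yw :: "(nat \<Rightarrow> real) \<Rightarrow> (nat \<Rightarrow> nat \<Rightarrow> nat \<Rightarrow> int) \<Rightarrow> crd \<Rightarrow> real" where
  "Yw x m C0 = 1"
| "Yw x m Neg = 0"
| "Yw x m (Mst k) = x k"
| "Yw x m (Gc j) = -1"
| "Yw x m (Pc i j) = x i"
| "Yw x m (Tc i j k c) = of_int (sgn (m i j k)) * x k"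

fun Zwit :: "(nat \<Rightarrow> real) \<Rightarrow> crd \<Rightarrow> real" where
  "Zwit x C0 = 1"
| "Zwit x Neg = 0"
| "Zwit x (Mst j) = -1"
| "Zwit x (Gc j) = - x j"
| "Zwit x (Pc i j) = x j"
| "Zwit x (Tc i j k c) = -1"

definition cw :: "(nat \<Rightarrow> real) \<Rightarrow> (nat \<Rightarrow> nat \<Rightarrow> nat \<Rightarrow> int) \<Rightarrow> nat \<Rightarrow> crd \<Rightarrow> real" where
  "cw x m v t = (if v = 0 then 1 else if v = 1 then sig m t else if v = 2 then Yw x m t else if v = 3 then Zwit x t else 0)"

lemma cw_simps[simp]: "cw x m 0 t = 1" "cw x m 1 t = sig m t" "cw x m (Suc 0) t = sig m t" "cw x m 2 t = Yw x m t" "cw x m 3 t = Zwit x t"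
  unfolding cw_def by auto

lemma witness_Phi:
  assumes eqs: "\<And>i j. i < n \<Longrightarrow> j < n \<Longrightarrow> x i * x j = (\<Sum>k<n. of_int (m i j k) * x k)"
    and xyR: "(v,w,R) \<in> Phic n m"
  shows "(\<Sum>t\<in>R. cw x m v t * cw x m w t) = 0"
proof -
  have big: "(\<Sum>t\<in>insert (Pc i j) (Tset n m i j). Yw x m t * Zwit x t) = 0" if ij: "i < n" "j < n" for i j
  proof -
    have "Pc i j \<notin> Tset n m i j" by (auto simp: Tset_iff)
    then have "(\<Sum>t\<in>insert (Pc i j) (Tset n m i j). Yw x m t * Zwit x t) = x i * x j + (\<Sum>t\<in>Tset n m i j. Yw x m t * Zwit x t)"
      using fin_Tset by simp
    also have "(\<Sum>t\<in>Tset n m i j. Yw x m t * Zwit x t) = (\<Sum>k<n. \<Sum>c<nat \<bar>m i j k\<bar>. Yw x m (Tc i j k c) * Zwit x (Tc i j k c))"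
      by (rule sum_Tset)
    also have "\<dots> = (\<Sum>k<n. - (of_int (m i j k) * x k))"
    proof (rule sum.cong[OF refl])
      fix k
      have "(\<Sum>c<nat \<bar>m i j k\<bar>. Yw x m (Tc i j k c) * Zwit x (Tc i j k c)) = - (of_nat (nat \<bar>m i j k\<bar>) * of_int (sgn (m i j k)) * x k)"
        by simp
      also have "of_nat (nat \<bar>m i j k\<bar>) * (of_int (sgn (m i j k)) :: real) = of_int (m i j k)"
        by (simp add: sgn_if)
      finally show "(\<Sum>c<nat \<bar>m i j k\<bar>. Yw x m (Tc i j k c) * Zwit x (Tc i j k c)) = - (of_int (m i j k) * x k)" by simp
    qed
    finally show ?thesis using eqs[OF ij] by (simp add: sum_negf)
  qed
  have sgsq: "(of_int (sgn z) :: real) * of_int (sgn z) = 1" if "z \<noteq> 0" for z :: int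
    using that by (auto simp: sgn_if)
  show ?thesis using xyR unfolding Phic_def
  proof (elim UnE imageE)
    fix t assume "(v,w,R) = (0,1,{C0,t})" "t \<in> {t\<in>Crds n m. sig m t = -1}"
    then show ?thesis by (cases "t = C0") auto
  next
    fix t assume "(v,w,R) = (0,1,{t,Neg})" "t \<in> {t\<in>Crds n m. t \<noteq> C0 \<and> sig m t = 1}"
    then show ?thesis by (cases "t = Neg") auto
  next
    fix p assume "(v,w,R) = (case p of (i,j) \<Rightarrow> (2,1,{Pc i j, Mst i}))" "p \<in> {..<n} \<times> {..<n}"
    then show ?thesis by (auto split: prod.splits)
  next
    fix p assume "(v,w,R) = (case p of (i,j,k,c) \<Rightarrow> (2,1,{Tc i j k c, Mst k}))" "p \<in> TIdx n m"
    then show ?thesis using sgsq by (auto split: prod.splits simp: TIdx_iff)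
  next
    fix j assume "(v,w,R) = (2,1,{C0, Gc j})" "j \<in> {..<n}"
    then show ?thesis by auto
  next
    fix j assume "(v,w,R) = (0,3,{C0, Mst j})" "j \<in> {..<n}"
    then show ?thesis by auto
  next
    fix p assume "(v,w,R) = (case p of (i,j,k,c) \<Rightarrow> (0,3,{C0, Tc i j k c}))" "p \<in> TIdx n m"
    then show ?thesis by (auto split: prod.splits)
  next
    fix p assume "(v,w,R) = (case p of (i,j) \<Rightarrow> (0,3,{Pc i j, Gc j}))" "p \<in> {..<n} \<times> {..<n}"
    then show ?thesis by (auto split: prod.splits)
  next
    fix j assume "(v,w,R) = (2,3,{Mst j, Gc j})" "j \<in> {..<n}"
    then show ?thesis by auto
  next
    fix p assume "(v,w,R) = (case p of (i,j) \<Rightarrow> (2,3, insert (Pc i j) (Tset n m i j)))" "p \<in> {..<n} \<times> {..<n}"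
    then show ?thesis using big by (auto split: prod.splits)
  qed
qed

lemma witness_Psi:
  assumes "x k0 \<noteq> 0" "(v,t) \<in> Psic n m k0"
  shows "cw x m v t \<noteq> 0"
  using assms unfolding Psic_def by auto



theorem universal:
  fixes n :: nat and m :: "nat \<Rightarrow> nat \<Rightarrow> nat \<Rightarrow> int" and x :: "nat \<Rightarrow> real" and k0 :: nat
  assumes k0: "k0 < n" and xk0: "x k0 \<noteq> 0"
    and eqs: "\<And>i j. i < n \<Longrightarrow> j < n \<Longrightarrow> x i * x j = (\<Sum>k<n. of_int (m i j k) * x k)"
  shows "\<exists>(N::nat set) I. finite N \<and> finite I \<and> (\<forall>c\<in>I. ci_wf N c) \<and> gauss_model N I \<noteq> {} \<and>
     (\<forall>S\<in>gauss_model N I. \<exists>y. (\<forall>k<n. y k \<in> subfield_gen (entries_on N S)) \<and> y k0 \<noteq> 0 \<and>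
        (\<forall>i<n. \<forall>j<n. y i * y j = (\<Sum>k<n. of_int (m i j k) * y k)))"
proof -
  define C where "C = to_nat ` Crds n m"
  define \<Phi> where "\<Phi> = (\<lambda>(v,w,R). (v,w,to_nat ` R)) ` Phic n m"
  define \<Psi> where "\<Psi> = (\<lambda>(v,t). (v, to_nat t)) ` Psic n m k0"
  have finPhic: "finite (Phic n m)" unfolding Phic_def using fin_Crds fin_TIdx by auto
  have finPsic: "finite (Psic n m k0)" unfolding Psic_def using fin_Crds by auto
  have Phic_ok: "v < 4 \<and> w < 4 \<and> v \<noteq> w" if "(v,w,R) \<in> Phic n m" for v w R
    using that unfolding Phic_def by auto
  have Psic_ok: "v < 4 \<and> t \<in> Crds n m" if "(v,t) \<in> Psic n m k0" for v t
    using that k0 Crds_mem unfolding Psic_def by auto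
  interpret gsetup C \<Phi> \<Psi>
  proof
    show "finite C" unfolding C_def using fin_Crds by simp
    show "finite \<Phi>" unfolding \<Phi>_def using finPhic by simp
    show "finite \<Psi>" unfolding \<Psi>_def using finPsic by simp
  next
    fix v w R assume "(v,w,R) \<in> \<Phi>"
    then obtain R' where R': "(v,w,R') \<in> Phic n m" "R = to_nat ` R'" unfolding \<Phi>_def by auto
    have "R' \<subseteq> Crds n m" by (rule Phic_sub[OF R'(1)])
    then show "v < 4 \<and> w < 4 \<and> v \<noteq> w \<and> R \<subseteq> C"
      using Phic_ok[OF R'(1)] R'(2) unfolding C_def by auto
  next
    fix v i assume "(v,i) \<in> \<Psi>"
    then obtain t where "(v,t) \<in> Psic n m k0" "i = to_nat t" unfolding \<Psi>_def by auto
    then show "v < 4 \<and> i \<in> C" using Psic_ok unfolding C_def by auto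
  qed
  define c where "c v i = cw x m v (from_nat i)" for v i
  have sum_re: "(\<Sum>i\<in>to_nat ` R. f i) = (\<Sum>t\<in>R. f (to_nat t))" for f :: "nat \<Rightarrow> real" and R :: "crd set"
    by (rule sum.reindex_cong[OF inj_on_subset[OF inj_to_nat subset_UNIV] refl refl])
  have w1: "(\<Sum>i\<in>R. c v i * c w i) = 0" if "(v,w,R) \<in> \<Phi>" for v w R
  proof -
    have "\<exists>R'. (v,w,R') \<in> Phic n m \<and> R = to_nat ` R'" using that unfolding \<Phi>_def by force
    then obtain R' where R': "(v,w,R') \<in> Phic n m" "R = to_nat ` R'" by blast
    show ?thesis unfolding R' sum_re c_def from_nat_to_nat using witness_Phi[OF eqs R'(1)] by simp
  qed
  have w2: "c v i \<noteq> 0" if "(v,i) \<in> \<Psi>" for v i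
  proof -
    have "\<exists>t. (v,t) \<in> Psic n m k0 \<and> i = to_nat t" using that unfolding \<Psi>_def by force
    then obtain t where "(v,t) \<in> Psic n m k0" "i = to_nat t" by blast
    then show ?thesis unfolding c_def using witness_Psi[of x k0 v t n m, OF xk0] by simp
  qed
  have nonempty: "gauss_model (GN C) (GI C \<Phi> \<Psi>) \<noteq> {}"
    using gS_model[of c, OF w1 w2] by auto
  have nec: "\<exists>y. (\<forall>k<n. y k \<in> subfield_gen (entries_on (GN C) S)) \<and> y k0 \<noteq> 0 \<and>
        (\<forall>i<n. \<forall>j<n. y i * y j = (\<Sum>k<n. of_int (m i j k) * y k))"
    if S: "S \<in> gauss_model (GN C) (GI C \<Phi> \<Psi>)" for S
  proof -
    define a where "a v t = S v (ax (to_nat t))" for v and t :: crd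
    define D where "D t = S (ax (to_nat t)) (ax (to_nat t))" for t :: crd
    interpret dnec n m k0 a D
    proof
      fix t assume "t \<in> Crds n m"
      then show "D t \<noteq> 0" unfolding D_def using S_diag[OF S, of "to_nat t"] C_def by auto
    next
      fix v w R assume vwR: "(v,w,R) \<in> Phic n m"
      then have "(v,w,to_nat ` R) \<in> \<Phi>" unfolding \<Phi>_def by force
      from S_Phi[OF S this] show "(\<Sum>t\<in>R. a v t * a w t / D t) = 0"
        unfolding sum_re a_def D_def .
    next
      fix v t assume "(v,t) \<in> Psic n m k0"
      then have "(v,to_nat t) \<in> \<Psi>" unfolding \<Psi>_def by force
      from S_Psi[OF S this] show "a v t \<noteq> 0" unfolding a_def .
    qed (rule k0)
    define y where "y k = Yv (Mst k)" for k
    have F: "is_subfield_real (subfield_gen (entries_on (GN C) S))" by (rule subfield_gen_sub)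
    have inF: "a v t \<in> subfield_gen (entries_on (GN C) S)" if "v < 4" "t \<in> Crds n m" for v t
      unfolding a_def using S_entries(1)[OF S that(1)] that C_def by auto
    have "y k \<in> subfield_gen (entries_on (GN C) S)" if "k < n" for k
      unfolding y_def Yv_def
      using inF[of 2 "Mst k"] inF[of 0 "Mst k"] inF[of 2 C0] inF[of 0 C0] Crds_mem that
      by (intro sfdivide[OF F] sfmult[OF F]) auto
    moreover have "y k0 \<noteq> 0" unfolding y_def by (rule Ynz)
    moreover have "\<forall>i<n. \<forall>j<n. y i * y j = (\<Sum>k<n. of_int (m i j k) * y k)"
      unfolding y_def using main_eq by simp
    ultimately show ?thesis by (intro exI[of _ y]) simp
  qed
  show ?thesis
    apply (rule exI[of _ "GN C"], rule exI[of _ "GI C \<Phi> \<Psi>"])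
    apply (intro conjI finN finI wf nonempty ballI)
    apply (erule nec)
    done
qed



definition spans :: "'k::field_char_0 set \<Rightarrow> bool" where
  "spans A \<longleftrightarrow> (\<forall>x. \<exists>c. x = (\<Sum>b\<in>A. of_rat (c b) * b))"

lemma min_span_aux:
  fixes B :: "'k::field_char_0 set"
  assumes B: "finite B" "spans B"
  shows "\<exists>A::'k set. finite A \<and> spans A \<and> (\<forall>A'::'k set. finite A' \<and> spans A' \<longrightarrow> card A \<le> card A')"
proof -
  define P where "P k \<longleftrightarrow> (\<exists>A::'k set. finite A \<and> spans A \<and> card A = k)" for k
  have PB: "P (card B)" unfolding P_def using B by blast
  have "P (LEAST k. P k)" using PB by (rule LeastI)
  then obtain A :: "'k set" where A: "finite A" "spans A" "card A = (LEAST k. P k)" unfolding P_def by blast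
  have "card A \<le> card A'" if "finite A'" "spans A'" for A' :: "'k set"
  proof -
    have "P (card A')" unfolding P_def using that by blast
    then have "(LEAST k. P k) \<le> card A'" by (rule Least_le)
    then show ?thesis using A(3) by simp
  qed
  then show ?thesis using A by blast
qed


lemma min_span:
  assumes "finite_over_rat TYPE('k::field_char_0)"
  shows "\<exists>A::'k set. finite A \<and> spans A \<and> (\<forall>A'::'k set. finite A' \<and> spans A' \<longrightarrow> card A \<le> card A')"
proof -
  have "\<exists>B::'k set. finite B \<and> spans B" using assms unfolding finite_over_rat_def spans_def .
  then show ?thesis by (elim exE conjE) (erule (1) min_span_aux)
qed

lemma indep_min:
  fixes A :: "'k::field_char_0 set"
  assumes A: "finite A" "spans A" and min: "\<forall>A'::'k set. finite A' \<and> spans A' \<longrightarrow> card A \<le> card A'"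
    and z: "(\<Sum>b\<in>A. of_rat (l b) * b) = 0" and b0: "b0 \<in> A"
  shows "l b0 = 0"
proof (rule ccontr)
  assume l0: "l b0 \<noteq> 0"
  let ?A = "A - {b0}"
  have split: "(\<Sum>b\<in>A. f b) = f b0 + (\<Sum>b\<in>?A. f b)" for f :: "'k \<Rightarrow> 'k"
    using A(1) b0 by (rule sum.remove)
  have "of_rat (l b0) * b0 = - (\<Sum>b\<in>?A. of_rat (l b) * b)" using z split[of "\<lambda>b. of_rat (l b) * b"]
    by (simp add: eq_neg_iff_add_eq_0)
  then have b0eq: "b0 = (\<Sum>b\<in>?A. of_rat (- l b / l b0) * b)"
    using l0 by (simp add: of_rat_divide of_rat_minus field_simps sum_divide_distrib[symmetric] sum_negf)
  have "spans ?A"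
    unfolding spans_def
  proof
    fix x
    obtain c where c: "x = (\<Sum>b\<in>A. of_rat (c b) * b)" using A(2) unfolding spans_def by blast
    have "x = of_rat (c b0) * b0 + (\<Sum>b\<in>?A. of_rat (c b) * b)" using c split by simp
    also have "of_rat (c b0) * b0 = of_rat (c b0) * (\<Sum>b\<in>?A. of_rat (- l b / l b0) * b)"
      by (rule arg_cong[OF b0eq])
    also have "\<dots> = (\<Sum>b\<in>?A. of_rat (c b0 * (- l b / l b0)) * b)"
      unfolding sum_distrib_left by (rule sum.cong[OF refl]) (simp only: mult.assoc[symmetric] of_rat_mult[symmetric])
    finally have "x = (\<Sum>b\<in>?A. of_rat (c b0 * (- l b / l b0)) * b + of_rat (c b) * b)"
      by (simp add: sum.distrib)
    also have "\<dots> = (\<Sum>b\<in>?A. of_rat (c b0 * (- l b / l b0) + c b) * b)"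
      by (rule sum.cong[OF refl]) (simp only: of_rat_add distrib_right)
    finally show "\<exists>c. x = (\<Sum>b\<in>?A. of_rat (c b) * b)" by (intro exI[of _ "\<lambda>b. c b0 * (- l b / l b0) + c b"])
  qed
  moreover have "finite ?A" using A by simp
  ultimately have "card A \<le> card ?A" using min[rule_format, of ?A] by simp
  moreover have "card ?A < card A" using A(1) b0 by (rule card_Diff1_less)
  ultimately show False by simp
qed

lemma basis_idx:
  assumes "finite_over_rat TYPE('k::field_char_0)"
  shows "\<exists>n (\<beta>::nat \<Rightarrow> 'k). n > 0 \<and> (\<forall>x. \<exists>c. x = (\<Sum>k<n. of_rat (c k) * \<beta> k))
     \<and> (\<forall>c. (\<Sum>k<n. of_rat (c k) * \<beta> k) = 0 \<longrightarrow> (\<forall>k<n. c k = 0))"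
proof -
  obtain A :: "'k set" where A: "finite A" "spans A" and min: "\<forall>A'::'k set. finite A' \<and> spans A' \<longrightarrow> card A \<le> card A'"
    using min_span[OF assms] by blast
  define n where "n = card A"
  obtain \<beta> where bij: "bij_betw \<beta> {0..<n} A" using ex_bij_betw_nat_finite[OF A(1)] n_def by blast
  have bij': "bij_betw \<beta> {..<n} A" using bij by (simp add: lessThan_atLeast0)
  have re: "(\<Sum>k<n. f (\<beta> k)) = (\<Sum>b\<in>A. f b)" for f :: "'k \<Rightarrow> 'k"
    using sum.reindex_bij_betw[OF bij', of f] .
  define \<gamma> where "\<gamma> = the_inv_into {..<n} \<beta>"
  have \<gamma>\<beta>: "\<gamma> (\<beta> k) = k" if "k < n" for k
    unfolding \<gamma>_def using bij' that by (simp add: bij_betw_def the_inv_into_f_f)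
  have span: "\<forall>x. \<exists>c. x = (\<Sum>k<n. of_rat (c k) * \<beta> k)"
  proof
    fix x
    obtain c where "x = (\<Sum>b\<in>A. of_rat (c b) * b)" using A(2) unfolding spans_def by blast
    then have "x = (\<Sum>k<n. of_rat (c (\<beta> k)) * \<beta> k)" using re[of "\<lambda>b. of_rat (c b) * b"] by simp
    then show "\<exists>c. x = (\<Sum>k<n. of_rat (c k) * \<beta> k)" by (intro exI[of _ "\<lambda>k. c (\<beta> k)"])
  qed
  have indep: "\<forall>k<n. c k = 0" if z: "(\<Sum>k<n. of_rat (c k) * \<beta> k) = 0" for c
  proof (intro allI impI)
    fix k assume k: "k < n"
    have "(\<Sum>k<n. of_rat (c (\<gamma> (\<beta> k))) * \<beta> k) = (\<Sum>k<n. of_rat (c k) * \<beta> k)"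
      by (rule sum.cong) (simp_all add: \<gamma>\<beta>)
    then have "(\<Sum>k<n. of_rat (c (\<gamma> (\<beta> k))) * \<beta> k) = 0" using z by simp
    then have "(\<Sum>b\<in>A. of_rat (c (\<gamma> b)) * b) = 0" using re[of "\<lambda>b. of_rat (c (\<gamma> b)) * b"] by simp
    moreover have "\<beta> k \<in> A" using bij' k by (auto simp: bij_betw_def)
    ultimately have "c (\<gamma> (\<beta> k)) = 0" using indep_min[OF A min, of "\<lambda>b. c (\<gamma> b)" "\<beta> k"] by blast
    then show "c k = 0" using \<gamma>\<beta>[OF k] by simp
  qed
  have npos: "n > 0"
  proof (rule ccontr)
    assume "\<not> n > 0"
    then have "n = 0" by simp
    then have "(1::'k) = 0" using span by auto
    then show False by simp
  qed
  show ?thesis using npos span indep by blast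
qed




lemma table_mult:
  fixes v :: "nat \<Rightarrow> 'a::field_char_0"
  assumes tab: "\<And>i j. i < n \<Longrightarrow> j < n \<Longrightarrow> v i * v j = (\<Sum>k<n. of_int (m i j k) * v k)"
  shows "(\<Sum>k<n. of_rat (\<Sum>i<n. \<Sum>j<n. c i * d j * of_int (m i j k)) * v k) =
         (\<Sum>i<n. of_rat (c i) * v i) * (\<Sum>j<n. of_rat (d j) * v j)"
proof -
  have "(\<Sum>i<n. of_rat (c i) * v i) * (\<Sum>j<n. of_rat (d j) * v j) =
      (\<Sum>i<n. \<Sum>j<n. of_rat (c i) * of_rat (d j) * (v i * v j))"
    by (simp add: sum_product ac_simps)
  also have "\<dots> = (\<Sum>i<n. \<Sum>j<n. \<Sum>k<n. of_rat (c i * d j * of_int (m i j k)) * v k)"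
    by (intro sum.cong refl) (simp add: tab sum_distrib_left of_rat_mult ac_simps)
  also have "\<dots> = (\<Sum>i<n. \<Sum>k<n. \<Sum>j<n. of_rat (c i * d j * of_int (m i j k)) * v k)"
    by (rule sum.cong[OF refl], rule sum.swap)
  also have "\<dots> = (\<Sum>k<n. \<Sum>i<n. \<Sum>j<n. of_rat (c i * d j * of_int (m i j k)) * v k)"
    by (rule sum.swap)
  also have "\<dots> = (\<Sum>k<n. of_rat (\<Sum>i<n. \<Sum>j<n. c i * d j * of_int (m i j k)) * v k)"
    by (simp add: of_rat_sum sum_distrib_right)
  finally show ?thesis by simp
qed

lemma common_denom:
  fixes S :: "rat set"
  assumes "finite S"
  shows "\<exists>N::int. N > 0 \<and> (\<forall>q\<in>S. \<exists>z::int. of_int N * q = of_int z)"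
  using assms
proof (induct S rule: finite_induct)
  case empty then show ?case by (intro exI[of _ 1]) simp
next
  case (insert q S)
  then obtain N :: int where N: "N > 0" "\<forall>q\<in>S. \<exists>z::int. of_int N * q = of_int z" by blast
  obtain a b where ab: "quotient_of q = (a, b)" by (cases "quotient_of q") auto
  have b: "b > 0" using quotient_of_denom_pos[OF ab] .
  have qab: "q = of_int a / of_int b" using quotient_of_div[OF ab] .
  have "N * b > 0" using N b by simp
  moreover have "\<forall>r\<in>insert q S. \<exists>z::int. of_int (N * b) * r = of_int z"
  proof
    fix r assume "r \<in> insert q S"
    then show "\<exists>z::int. of_int (N * b) * r = of_int z"
    proof
      assume "r = q"
      then have "of_int (N * b) * r = of_int (N * a)" using qab b by (simp add: field_simps)
      then show ?thesis by blast
    next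
      assume "r \<in> S"
      then obtain z where "of_int N * r = of_int z" using N by blast
      then have "of_int (N * b) * r = of_int (z * b)" by (simp add: algebra_simps)
      then show ?thesis by blast
    qed
  qed
  ultimately show ?case by blast
qed

context
  fixes e :: "'k::field_char_0 \<Rightarrow> real"
  assumes e: "field_hom e"
begin

lemma e1: "e 1 = 1" and eadd: "e (x + y) = e x + e y" and emult: "e (x * y) = e x * e y"
  using e unfolding field_hom_def by auto

lemma e0: "e 0 = 0"
  using eadd[of 0 0] by simp

lemma eminus: "e (- x) = - e x"
  using eadd[of x "- x"] e0 by simp

lemma enat: "e (of_nat n) = of_nat n"
  by (induct n) (simp_all add: e0 e1 eadd)

lemma eint: "e (of_int z) = of_int z"
proof (cases "z \<ge> 0")
  case True then show ?thesis using enat[of "nat z"] by simp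
next
  case False then show ?thesis using enat[of "nat (- z)"] eminus[of "of_nat (nat (- z))"] by simp
qed

lemma einv: "x \<noteq> 0 \<Longrightarrow> e (inverse x) = inverse (e x)"
proof -
  assume x: "x \<noteq> 0"
  have "e x * e (inverse x) = 1" using emult[of x "inverse x"] e1 x by simp
  then show ?thesis by (rule inverse_unique[symmetric])
qed

lemma enz: "x \<noteq> 0 \<Longrightarrow> e x \<noteq> 0"
  using emult[of x "inverse x"] e1 by auto

lemma erat: "e (of_rat q) = of_rat q"
proof -
  obtain a b where ab: "quotient_of q = (a, b)" by (cases "quotient_of q") auto
  have b: "b > 0" using quotient_of_denom_pos[OF ab] .
  have "q = of_int a / of_int b" using quotient_of_div[OF ab] .
  then have "(of_rat q :: 'k) = of_int a * inverse (of_int b)" "(of_rat q :: real) = of_int a * inverse (of_int b)"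
    by (simp_all only: of_rat_mult of_rat_inverse of_rat_of_int_eq divide_inverse)
  then show ?thesis using emult eint einv b by simp
qed

lemma esum: "e (\<Sum>k\<in>A. f k) = (\<Sum>k\<in>A. e (f k))"
  by (induct A rule: infinite_finite_induct) (simp_all add: e0 eadd)

end



lemma hom_from_sol:
  fixes b :: "nat \<Rightarrow> 'k::field_char_0" and y :: "nat \<Rightarrow> real" and m :: "nat \<Rightarrow> nat \<Rightarrow> nat \<Rightarrow> int"
  assumes span: "\<forall>x. \<exists>c. x = (\<Sum>k<n. of_rat (c k) * b k)"
    and indep: "\<forall>c. (\<Sum>k<n. of_rat (c k) * b k) = 0 \<longrightarrow> (\<forall>k<n. c k = 0)"
    and mult: "\<And>i j. i < n \<Longrightarrow> j < n \<Longrightarrow> b i * b j = (\<Sum>k<n. of_int (m i j k) * b k)"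
    and F: "is_subfield_real F" and yF: "\<And>k. k < n \<Longrightarrow> y k \<in> F"
    and k0: "k0 < n" and yk0: "y k0 \<noteq> 0"
    and yeq: "\<And>i j. i < n \<Longrightarrow> j < n \<Longrightarrow> y i * y j = (\<Sum>k<n. of_int (m i j k) * y k)"
  shows "\<exists>f::'k \<Rightarrow> real. field_hom f \<and> range f \<subseteq> F"
proof -
  define coef where "coef x = (SOME c. x = (\<Sum>k<n. of_rat (c k) * b k))" for x
  have coef: "x = (\<Sum>k<n. of_rat (coef x k) * b k)" for x
  proof -
    have "\<exists>c. x = (\<Sum>k<n. of_rat (c k) * b k)" using span by blast
    from someI_ex[OF this] show ?thesis unfolding coef_def .
  qed
  have uniq: "c k = d k" if eq: "(\<Sum>k<n. of_rat (c k) * b k) = (\<Sum>k<n. of_rat (d k) * b k)" and k: "k < n" for c d k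
  proof -
    have "(\<Sum>k<n. of_rat (c k - d k) * b k) = (\<Sum>k<n. of_rat (c k) * b k) - (\<Sum>k<n. of_rat (d k) * b k)"
      by (simp add: of_rat_diff left_diff_distrib sum_subtractf)
    also have "\<dots> = 0" using eq by simp
    finally have "(\<Sum>k<n. of_rat (c k - d k) * b k) = 0" .
    then have "c k - d k = 0" using indep[rule_format, of "\<lambda>k. c k - d k"] k by simp
    then show ?thesis by simp
  qed
  define f where "f x = (\<Sum>k<n. of_rat (coef x k) * y k)" for x
  have flin: "f (\<Sum>k<n. of_rat (c k) * b k) = (\<Sum>k<n. of_rat (c k) * y k)" for c
  proof -
    have "coef (\<Sum>k<n. of_rat (c k) * b k) k = c k" if "k < n" for k
      using uniq[OF coef[symmetric] that] .
    then show ?thesis unfolding f_def by (intro sum.cong refl) simp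
  qed
  have fadd: "f (x + w) = f x + f w" for x w
  proof -
    have "x + w = (\<Sum>k<n. of_rat (coef x k + coef w k) * b k)"
      by (subst coef[of x], subst coef[of w]) (simp add: of_rat_add distrib_right sum.distrib)
    then have "f (x + w) = (\<Sum>k<n. of_rat (coef x k + coef w k) * y k)" using flin by simp
    also have "\<dots> = f x + f w" unfolding f_def by (simp add: of_rat_add distrib_right sum.distrib)
    finally show ?thesis .
  qed
  have fmult: "f (x * w) = f x * f w" for x w
  proof -
    define t where "t k = (\<Sum>i<n. \<Sum>j<n. coef x i * coef w j * of_int (m i j k))" for k
    have "x * w = (\<Sum>k<n. of_rat (t k) * b k)"
      unfolding t_def by (subst coef[of x], subst coef[of w], rule table_mult[symmetric]) (rule mult)
    then have "f (x * w) = (\<Sum>k<n. of_rat (t k) * y k)" using flin by simp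
    also have "\<dots> = f x * f w" unfolding f_def t_def by (rule table_mult) (rule yeq)
    finally show ?thesis .
  qed
  have fb: "f (b k0) = y k0"
  proof -
    have "(\<Sum>k<n. of_rat (if k = k0 then 1 else 0) * b k) = (\<Sum>k<n. if k = k0 then b k else 0)"
      by (rule sum.cong) auto
    also have "\<dots> = b k0" using k0 by simp
    finally have "b k0 = (\<Sum>k<n. of_rat (if k = k0 then 1 else 0) * b k)" by simp
    then have "f (b k0) = (\<Sum>k<n. of_rat (if k = k0 then 1 else 0) * y k)"
      using flin[of "\<lambda>k. if k = k0 then 1 else 0"] by simp
    also have "\<dots> = (\<Sum>k<n. if k = k0 then y k else 0)"
      by (rule sum.cong) auto
    also have "\<dots> = y k0" using k0 by simp
    finally show ?thesis .
  qed
  have f1: "f 1 = 1"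
  proof -
    have "f (b k0) = f 1 * f (b k0)" using fmult[of 1 "b k0"] by simp
    then show ?thesis using fb yk0 by simp
  qed
  have "field_hom f" unfolding field_hom_def using f1 fadd fmult by blast
  moreover have "range f \<subseteq> F"
  proof
    fix z assume "z \<in> range f"
    then obtain x where "z = f x" by blast
    then show "z \<in> F" unfolding f_def using yF by (auto intro!: sfsum[OF F] sfmult[OF F] sfrat[OF F])
  qed
  ultimately show ?thesis by blast
qed


lemma alg_main:
  fixes \<beta> :: "nat \<Rightarrow> 'k::field_char_0" and e :: "'k \<Rightarrow> real"
  assumes npos: "n > 0"
    and span: "\<forall>x. \<exists>c. x = (\<Sum>k<n. of_rat (c k) * \<beta> k)"
    and indep: "\<forall>c. (\<Sum>k<n. of_rat (c k) * \<beta> k) = 0 \<longrightarrow> (\<forall>k<n. c k = 0)"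
    and e: "field_hom e"
  shows "\<exists>(m::nat \<Rightarrow> nat \<Rightarrow> nat \<Rightarrow> int) (x::nat \<Rightarrow> real) k0. k0 < n \<and> x k0 \<noteq> 0 \<and>
     (\<forall>i<n. \<forall>j<n. x i * x j = (\<Sum>k<n. of_int (m i j k) * x k)) \<and>
     (\<forall>F y. is_subfield_real F \<longrightarrow> (\<forall>k<n. y k \<in> F) \<longrightarrow> y k0 \<noteq> 0 \<longrightarrow>
        (\<forall>i<n. \<forall>j<n. y i * y j = (\<Sum>k<n. of_int (m i j k) * y k)) \<longrightarrow>
        (\<exists>f::'k \<Rightarrow> real. field_hom f \<and> range f \<subseteq> F))"
proof -
  define \<mu> where "\<mu> i j = (SOME c. \<beta> i * \<beta> j = (\<Sum>k<n. of_rat (c k) * \<beta> k))" for i j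
  have \<mu>: "\<beta> i * \<beta> j = (\<Sum>k<n. of_rat (\<mu> i j k) * \<beta> k)" for i j
  proof -
    have "\<exists>c. \<beta> i * \<beta> j = (\<Sum>k<n. of_rat (c k) * \<beta> k)" using span by blast
    from someI_ex[OF this] show ?thesis unfolding \<mu>_def .
  qed
  have finS: "finite ((\<lambda>(i,j,k). \<mu> i j k) ` ({..<n} \<times> {..<n} \<times> {..<n}))" by auto
  obtain N :: int where N: "N > 0" and Nz: "\<forall>q\<in>(\<lambda>(i,j,k). \<mu> i j k) ` ({..<n} \<times> {..<n} \<times> {..<n}). \<exists>z::int. of_int N * q = of_int z"
    using common_denom[OF finS] by blast
  define m where "m i j k = (SOME z::int. of_int N * \<mu> i j k = of_int z)" for i j k
  have m: "of_int (m i j k) = of_int N * \<mu> i j k" if "i < n" "j < n" "k < n" for i j k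
  proof -
    have "\<exists>z::int. of_int N * \<mu> i j k = of_int z" using Nz that by force
    from someI_ex[OF this] show ?thesis unfolding m_def by simp
  qed
  have Nk: "(of_int N :: 'k) \<noteq> 0" using N by simp
  define b where "b k = of_int N * \<beta> k" for k
  have span_b: "\<forall>x. \<exists>c. x = (\<Sum>k<n. of_rat (c k) * b k)"
  proof
    fix x
    obtain c where c: "x = (\<Sum>k<n. of_rat (c k) * \<beta> k)" using span by blast
    have "x = (\<Sum>k<n. of_rat (c k / of_int N) * b k)"
      unfolding c b_def using Nk by (intro sum.cong refl) (simp add: of_rat_divide field_simps)
    then show "\<exists>c. x = (\<Sum>k<n. of_rat (c k) * b k)" by (intro exI[of _ "\<lambda>k. c k / of_int N"])
  qed
  have indep_b: "\<forall>c. (\<Sum>k<n. of_rat (c k) * b k) = 0 \<longrightarrow> (\<forall>k<n. c k = 0)"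
  proof (intro allI impI)
    fix c k assume z: "(\<Sum>k<n. of_rat (c k) * b k) = 0" and k: "k < n"
    have "(\<Sum>k<n. of_rat (c k * of_int N) * \<beta> k) = (\<Sum>k<n. of_rat (c k) * b k)"
      unfolding b_def by (intro sum.cong refl) (simp add: of_rat_mult ac_simps)
    then have "c k * of_int N = 0" using z indep[rule_format, of "\<lambda>k. c k * of_int N"] k by simp
    then show "c k = 0" using N by simp
  qed
  have mult_b: "b i * b j = (\<Sum>k<n. of_int (m i j k) * b k)" if "i < n" "j < n" for i j
  proof -
    have "b i * b j = of_int N * of_int N * (\<beta> i * \<beta> j)" unfolding b_def by (simp add: ac_simps)
    also have "\<dots> = (\<Sum>k<n. of_int N * of_int N * (of_rat (\<mu> i j k) * \<beta> k))"
      by (simp add: \<mu> sum_distrib_left)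
    also have "\<dots> = (\<Sum>k<n. of_int (m i j k) * b k)"
    proof (rule sum.cong[OF refl])
      fix k assume "k \<in> {..<n}"
      then have "(of_int (m i j k) :: 'k) = of_rat (of_int (m i j k))" by simp
      also have "\<dots> = of_rat (of_int N * \<mu> i j k)" using m that \<open>k \<in> {..<n}\<close> by simp
      finally have "(of_int (m i j k) :: 'k) = of_int N * of_rat (\<mu> i j k)" by (simp add: of_rat_mult)
      then show "of_int N * of_int N * (of_rat (\<mu> i j k) * \<beta> k) = of_int (m i j k) * b k"
        unfolding b_def by (simp add: ac_simps)
    qed
    finally show ?thesis .
  qed
  define x where "x k = e (b k)" for k
  have xeq: "x i * x j = (\<Sum>k<n. of_int (m i j k) * x k)" if "i < n" "j < n" for i j
  proof -
    have "x i * x j = e (b i * b j)" unfolding x_def by (simp add: emult[OF e])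
    also have "\<dots> = e (\<Sum>k<n. of_int (m i j k) * b k)" using mult_b[OF that] by simp
    also have "\<dots> = (\<Sum>k<n. of_int (m i j k) * x k)" unfolding x_def esum[OF e] emult[OF e] eint[OF e] ..
    finally show ?thesis .
  qed
  have b0: "b 0 \<noteq> 0"
  proof
    assume b0: "b 0 = 0"
    have "(\<Sum>k<n. of_rat (if k = 0 then 1 else 0) * b k) = (\<Sum>k<n. if k = 0 then b k else 0)"
      by (rule sum.cong) auto
    also have "\<dots> = 0" using b0 npos by simp
    finally have "(if (0::nat) = 0 then 1 else 0 :: rat) = 0"
      using indep_b[rule_format, of "\<lambda>k. if k = 0 then 1 else 0" 0] npos by simp
    then show False by simp
  qed
  have x0: "x 0 \<noteq> 0" unfolding x_def using enz[OF e b0] .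
  have hom: "\<exists>f::'k \<Rightarrow> real. field_hom f \<and> range f \<subseteq> F"
    if "is_subfield_real F" "\<forall>k<n. y k \<in> F" "y 0 \<noteq> 0" "\<forall>i<n. \<forall>j<n. y i * y j = (\<Sum>k<n. of_int (m i j k) * y k)" for F y
    by (rule hom_from_sol[where n = n and b = b and m = m and F = F and y = y and ?k0.0 = 0, OF span_b indep_b mult_b that(1) _ npos that(3)]) (use that in auto)
  show ?thesis
    by (rule exI[of _ m], rule exI[of _ x], rule exI[of _ 0]) (use npos x0 xeq hom in auto)
qed



lemma rat_sq_ne_2:
  fixes r :: real
  assumes "r \<in> \<rat>"
  shows "r * r \<noteq> 2"
proof
  assume r2: "r * r = 2"
  obtain q where q: "r = of_rat q" using assms by (auto elim: Rats_cases)
  have q2: "q * q = 2" using r2 unfolding q by (metis of_rat_eq_iff of_rat_mult of_rat_numeral_eq)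
  obtain a b where ab: "quotient_of q = (a, b)" by (cases "quotient_of q") auto
  have b: "b > 0" using quotient_of_denom_pos[OF ab] .
  have cop: "coprime a b" using quotient_of_coprime[OF ab] .
  have "q = of_int a / of_int b" using quotient_of_div[OF ab] .
  then have "(of_int a / of_int b) * (of_int a / of_int b) = (2::rat)" using q2 by simp
  then have "(of_int (a * a) :: rat) = of_int (2 * b * b)" using b by (simp add: field_simps)
  then have aa: "a * a = 2 * b * b" by (simp only: of_int_eq_iff)
  then have "even (a * a)" by simp
  then have "even a" by simp
  then obtain c where c: "a = 2 * c" by blast
  then have "b * b = 2 * c * c" using aa by simp
  then have "even (b * b)" by simp
  then have "even b" by simp
  have "is_unit (2::int)" using coprime_common_divisor[OF cop \<open>even a\<close> \<open>even b\<close>] .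
  then show False by simp
qed


lemma part1:
  fixes TYPE_K :: "'k::field_char_0 itself"
  assumes fin: "finite_over_rat TYPE('k)"
    and ex: "\<exists>e::'k \<Rightarrow> real. field_hom e"
  shows "\<exists>(N::nat set) I. finite N \<and> finite I \<and> (\<forall>c\<in>I. ci_wf N c) \<and>
            gauss_model N I \<noteq> {} \<and>
            (\<forall>S\<in>gauss_model N I. \<exists>f::'k \<Rightarrow> real. field_hom f \<and>
                 range f \<subseteq> subfield_gen (entries_on N S))"
proof -
  obtain e :: "'k \<Rightarrow> real" where e: "field_hom e" using ex by blast
  obtain n and \<beta> :: "nat \<Rightarrow> 'k" where npos: "n > 0"
    and span: "\<forall>x. \<exists>c. x = (\<Sum>k<n. of_rat (c k) * \<beta> k)"
    and indep: "\<forall>c. (\<Sum>k<n. of_rat (c k) * \<beta> k) = 0 \<longrightarrow> (\<forall>k<n. c k = 0)"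
    using basis_idx[OF fin] by (elim exE conjE)
  obtain m :: "nat \<Rightarrow> nat \<Rightarrow> nat \<Rightarrow> int" and x :: "nat \<Rightarrow> real" and k0 where k0: "k0 < n" and xk0: "x k0 \<noteq> 0"
    and xeq: "\<forall>i<n. \<forall>j<n. x i * x j = (\<Sum>k<n. of_int (m i j k) * x k)"
    and hom: "\<forall>F y. is_subfield_real F \<longrightarrow> (\<forall>k<n. y k \<in> F) \<longrightarrow> y k0 \<noteq> 0 \<longrightarrow>
        (\<forall>i<n. \<forall>j<n. y i * y j = (\<Sum>k<n. of_int (m i j k) * y k)) \<longrightarrow>
        (\<exists>f::'k \<Rightarrow> real. field_hom f \<and> range f \<subseteq> F)"
    using alg_main[OF npos span indep e] by (elim exE conjE)
  have xeq': "x i * x j = (\<Sum>k<n. of_int (m i j k) * x k)" if "i < n" "j < n" for i j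
    using xeq that by simp
  have U: "\<exists>(N::nat set) I. finite N \<and> finite I \<and> (\<forall>c\<in>I. ci_wf N c) \<and> gauss_model N I \<noteq> {} \<and>
     (\<forall>S\<in>gauss_model N I. \<exists>y. (\<forall>k<n. y k \<in> subfield_gen (entries_on N S)) \<and> y k0 \<noteq> 0 \<and>
        (\<forall>i<n. \<forall>j<n. y i * y j = (\<Sum>k<n. of_int (m i j k) * y k)))"
    apply (rule universal[of k0 n x m])
    using k0 xk0 xeq' by auto
  obtain N I where NI: "finite N" "finite I" "\<forall>c\<in>I. ci_wf N c" "gauss_model N I \<noteq> {}"
    and sol: "\<forall>S\<in>gauss_model N I. \<exists>y. (\<forall>k<n. y k \<in> subfield_gen (entries_on N S)) \<and> y k0 \<noteq> 0 \<and>
        (\<forall>i<n. \<forall>j<n. y i * y j = (\<Sum>k<n. of_int (m i j k) * y k))"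
    using U by (elim exE conjE)
  have "\<forall>S\<in>gauss_model N I. \<exists>f::'k \<Rightarrow> real. field_hom f \<and> range f \<subseteq> subfield_gen (entries_on N S)"
  proof
    fix S assume S: "S \<in> gauss_model N I"
    obtain y where y: "\<forall>k<n. y k \<in> subfield_gen (entries_on N S)" "y k0 \<noteq> 0"
        "\<forall>i<n. \<forall>j<n. y i * y j = (\<Sum>k<n. of_int (m i j k) * y k)"
      using sol S by (elim ballE exE conjE) auto
    show "\<exists>f::'k \<Rightarrow> real. field_hom f \<and> range f \<subseteq> subfield_gen (entries_on N S)"
      apply (rule hom[rule_format])
      apply (rule subfield_gen_sub)
      using y by auto
  qed
  then show ?thesis using NI by (intro exI[of _ N] exI[of _ I]) simp
qed

definition m2 :: "nat \<Rightarrow> nat \<Rightarrow> nat \<Rightarrow> int" where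
  "m2 i j k = (if i = 1 \<and> j = 1 then (if k = 0 then 2 else 0)
     else if i = 0 \<and> j = 0 then (if k = 0 then 1 else 0) else (if k = 1 then 1 else 0))"

lemma sum2: "(\<Sum>k<(2::nat). f k) = f 0 + f 1"
  by (simp add: numeral_2_eq_2)

lemma part2:
  "\<exists>(N::nat set) I. finite N \<and> finite I \<and> (\<forall>c\<in>I. ci_wf N c) \<and>
            gauss_model N I \<noteq> {} \<and>
            (\<forall>S\<in>gauss_model N I. \<not> entries_on N S \<subseteq> \<rat>)"
proof -
  define x where "x k = (if k = 0 then 1 else sqrt 2)" for k :: nat
  have less2: "i < 2 \<longleftrightarrow> i = 0 \<or> i = 1" for i :: nat by auto
  have xeq: "x i * x j = (\<Sum>k<2. of_int (m2 i j k) * x k)" if "i < 2" "j < 2" for i j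
    using that unfolding sum2 less2 x_def m2_def by auto
  have U: "\<exists>(N::nat set) I. finite N \<and> finite I \<and> (\<forall>c\<in>I. ci_wf N c) \<and> gauss_model N I \<noteq> {} \<and>
     (\<forall>S\<in>gauss_model N I. \<exists>y. (\<forall>k<2. y k \<in> subfield_gen (entries_on N S)) \<and> y 0 \<noteq> 0 \<and>
        (\<forall>i<2. \<forall>j<2. y i * y j = (\<Sum>k<2. of_int (m2 i j k) * y k)))"
    apply (rule universal[of 0 2 x m2])
    using xeq by (auto simp: x_def)
  obtain N I where NI: "finite N" "finite I" "\<forall>c\<in>I. ci_wf N c" "gauss_model N I \<noteq> {}"
    and sol: "\<forall>S\<in>gauss_model N I. \<exists>y. (\<forall>k<2. y k \<in> subfield_gen (entries_on N S)) \<and> y 0 \<noteq> 0 \<and>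
        (\<forall>i<2. \<forall>j<2. y i * y j = (\<Sum>k<2. of_int (m2 i j k) * y k))"
    using U by (elim exE conjE)
  have "\<forall>S\<in>gauss_model N I. \<not> entries_on N S \<subseteq> \<rat>"
  proof (intro ballI notI)
    fix S assume S: "S \<in> gauss_model N I" and Q: "entries_on N S \<subseteq> \<rat>"
    obtain y where y: "\<forall>k<2. y k \<in> subfield_gen (entries_on N S)" "y 0 \<noteq> 0"
        "\<forall>i<2. \<forall>j<2. y i * y j = (\<Sum>k<2. of_int (m2 i j k) * y k)"
      using sol S by (elim ballE exE conjE) auto
    have sub: "subfield_gen (entries_on N S) \<subseteq> \<rat>" by (rule subfield_gen_least[OF Rats_subfield Q])
    have y1: "y 1 \<in> \<rat>" using y(1) sub by auto
    have "y 0 * y 0 = y 0" using y(3) unfolding sum2 m2_def by auto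
    then have y0: "y 0 = 1" using y(2) by simp
    have "y 1 * y 1 = 2 * y 0" using y(3) unfolding sum2 m2_def by auto
    then have "y 1 * y 1 = 2" using y0 by simp
    then show False using rat_sq_ne_2[OF y1] by simp
  qed
  then show ?thesis using NI by (intro exI[of _ N] exI[of _ I]) simp
qed

theorem corollary4p3:
  fixes TYPE_K :: "'k::field_char_0 itself"
  assumes "finite_over_rat TYPE('k)"
    and "\<exists>e::'k \<Rightarrow> real. field_hom e"
  shows "(\<exists>(N::nat set) I. finite N \<and> finite I \<and> (\<forall>c\<in>I. ci_wf N c) \<and>
            gauss_model N I \<noteq> {} \<and>
            (\<forall>S\<in>gauss_model N I. \<exists>f::'k \<Rightarrow> real. field_hom f \<and>
                 range f \<subseteq> subfield_gen (entries_on N S)))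
       \<and> (\<exists>(N::nat set) I. finite N \<and> finite I \<and> (\<forall>c\<in>I. ci_wf N c) \<and>
            gauss_model N I \<noteq> {} \<and>
            (\<forall>S\<in>gauss_model N I. \<not> entries_on N S \<subseteq> \<rat>))"
  using part1[OF assms] part2 by (rule conjI)


end
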